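(* Let $M$ be a smooth $n$-manifold with a torsion-free linear connection $\nabla$ and a symmetric $(0,2)$-tensor field $c$, and let $\widetilde{\nabla}$ be the linear connection on $T^{\ast}M$ given in the adapted frame by $\widetilde{\nabla}_{E_{\overline{i}}}E_{\overline{j}}=0$, $\widetilde{\nabla}_{E_{\overline{i}}}E_{j}=0$, $\widetilde{\nabla}_{E_{i}}E_{\overline{j}}=-\Gamma^{j}_{ih}E_{\overline{h}}$, $\widetilde{\nabla}_{E_{i}}E_{j}=\Gamma^{h}_{ij}E_{h}+\tfrac12(\nabla_i c_{jh}+\nabla_j c_{ih}-\nabla_h c_{ij})E_{\overline{h}}$. Then $T^{\ast}M$ is Ricci semi-symmetric with respect to $\widetilde\nabla$ if and only if $M$ is Ricci semi-symmetric with respect to $\nabla$.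
   Context: Summation convention; $\overline{i}=n+i$. $\Gamma^h_{ij}$ are the coefficients of $\nabla$ in local coordinates $(x^i)$; $\nabla_ic_{jk}$ the components of $\nabla c$. On $T^{\ast}M$ use induced coordinates $(x^i,p_i)$, $\partial_{\overline i}=\partial/\partial p_i$, and the adapted frame $E_j=\partial_j+p_a\Gamma^a_{hj}\partial_{\overline h}$, $E_{\overline j}=\partial_{\overline j}$. (The connection $\widetilde\nabla$ is the metric connection of the modified Riemannian extension $\overline{g}_{\nabla,c}$ with torsion $\widetilde T(E_i,E_j)=-p_sR_{ijr}^{\ \ \ s}E_{\overline r}$, other adapted torsion components zero.) For a linear connection $D$ on a manifold $N$ with curvature $K(X,Y)=D_XD_Y-D_YD_X-D_{[X,Y]}$, its Ricci tensor is $\mathrm{Ric}(Y,Z)=\operatorname{trace}(X\mapsto K(X,Y)Z)$; $N$ is Ricci semi-symmetric with respect to $D$ if $(K(X,Y)\cdot\mathrm{Ric})(Z,W)=-\mathrm{Ric}(K(X,Y)Z,W)-\mathrm{Ric}(Z,K(X,Y)W)=0$ for all vector fields $X,Y,Z,W$. *)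

theory Defs
  imports "HOL-Analysis.Analysis"
begin

(* Local (coordinate) setting: M is modelled by an open set U of a Euclidean space 'a
   (coordinates = inner products with the Basis vectors), T*M over U by U \<times> UNIV in 'a \<times> 'a,
   point (x,p), p_i = p \<bullet> i. *)

primrec pd :: "'a list \<Rightarrow> ('a::real_normed_vector \<Rightarrow> 'c::real_normed_vector) \<Rightarrow> 'a \<Rightarrow> 'c" where
  "pd [] f = f"
| "pd (v # vs) f = (\<lambda>x. frechet_derivative (pd vs f) (at x) v)"

definition sm_on :: "'a::real_normed_vector set \<Rightarrow> ('a \<Rightarrow> 'c::real_normed_vector) \<Rightarrow> bool" where
  "sm_on V f \<longleftrightarrow> (\<forall>vs. \<forall>x\<in>V. pd vs f differentiable (at x))"

definition lie :: "('b::euclidean_space \<Rightarrow> 'b) \<Rightarrow> ('b \<Rightarrow> 'b) \<Rightarrow> 'b \<Rightarrow> 'b" where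
  "lie X Y = (\<lambda>x. frechet_derivative Y (at x) (X x) - frechet_derivative X (at x) (Y x))"

definition curv :: "(('b::euclidean_space \<Rightarrow> 'b) \<Rightarrow> ('b \<Rightarrow> 'b) \<Rightarrow> 'b \<Rightarrow> 'b)
     \<Rightarrow> ('b \<Rightarrow> 'b) \<Rightarrow> ('b \<Rightarrow> 'b) \<Rightarrow> ('b \<Rightarrow> 'b) \<Rightarrow> 'b \<Rightarrow> 'b" where
  "curv D X Y Z = (\<lambda>x. D X (D Y Z) x - D Y (D X Z) x - D (lie X Y) Z x)"

definition ric :: "(('b::euclidean_space \<Rightarrow> 'b) \<Rightarrow> ('b \<Rightarrow> 'b) \<Rightarrow> 'b \<Rightarrow> 'b)
     \<Rightarrow> ('b \<Rightarrow> 'b) \<Rightarrow> ('b \<Rightarrow> 'b) \<Rightarrow> 'b \<Rightarrow> real" where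
  "ric D Y Z = (\<lambda>x. \<Sum>b\<in>Basis. curv D (\<lambda>_. b) Y Z x \<bullet> b)"

definition ricci_semisym :: "'b::euclidean_space set \<Rightarrow> (('b \<Rightarrow> 'b) \<Rightarrow> ('b \<Rightarrow> 'b) \<Rightarrow> 'b \<Rightarrow> 'b) \<Rightarrow> bool" where
  "ricci_semisym V D \<longleftrightarrow>
     (\<forall>X Y Z W. sm_on V X \<and> sm_on V Y \<and> sm_on V Z \<and> sm_on V W \<longrightarrow>
        (\<forall>x\<in>V. - ric D (curv D X Y Z) W x - ric D Z (curv D X Y W) x = 0))"

(* Gam i j h x = \<Gamma>^h_{ij}(x);  c i j x = c_{ij}(x) *)
definition connM :: "('a::euclidean_space \<Rightarrow> 'a \<Rightarrow> 'a \<Rightarrow> 'a \<Rightarrow> real) \<Rightarrow> ('a \<Rightarrow> 'a) \<Rightarrow> ('a \<Rightarrow> 'a) \<Rightarrow> 'a \<Rightarrow> 'a" where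
  "connM Gam X Y = (\<lambda>x. frechet_derivative Y (at x) (X x)
      + (\<Sum>i\<in>Basis. \<Sum>j\<in>Basis. \<Sum>h\<in>Basis. (Gam i j h x * (X x \<bullet> i) * (Y x \<bullet> j)) *\<^sub>R h))"

definition covc :: "('a::euclidean_space \<Rightarrow> 'a \<Rightarrow> 'a \<Rightarrow> 'a \<Rightarrow> real) \<Rightarrow> ('a \<Rightarrow> 'a \<Rightarrow> 'a \<Rightarrow> real)
     \<Rightarrow> 'a \<Rightarrow> 'a \<Rightarrow> 'a \<Rightarrow> 'a \<Rightarrow> real" where
  "covc Gam c i j k x = frechet_derivative (c j k) (at x) i
      - (\<Sum>m\<in>Basis. Gam i j m x * c m k x) - (\<Sum>m\<in>Basis. Gam i k m x * c j m x)"

(* adapted frame index set: Inl j \<leftrightarrow> E_j, Inr j \<leftrightarrow> E_{bar j} *)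
definition adI :: "('a::euclidean_space + 'a) set" where
  "adI = Inl ` Basis \<union> Inr ` Basis"

fun adE :: "('a::euclidean_space \<Rightarrow> 'a \<Rightarrow> 'a \<Rightarrow> 'a \<Rightarrow> real) \<Rightarrow> 'a + 'a \<Rightarrow> 'a \<times> 'a \<Rightarrow> 'a \<times> 'a" where
  "adE Gam (Inl j) z = (j, \<Sum>h\<in>Basis. (\<Sum>a\<in>Basis. (snd z \<bullet> a) * Gam h j a (fst z)) *\<^sub>R h)"
| "adE Gam (Inr j) z = (0, j)"

(* components of a vector field on T*U with respect to the adapted frame *)
fun adC :: "('a::euclidean_space \<Rightarrow> 'a \<Rightarrow> 'a \<Rightarrow> 'a \<Rightarrow> real) \<Rightarrow> 'a + 'a \<Rightarrow> ('a \<times> 'a \<Rightarrow> 'a \<times> 'a) \<Rightarrow> 'a \<times> 'a \<Rightarrow> real" where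
  "adC Gam (Inl j) V z = fst (V z) \<bullet> j"
| "adC Gam (Inr h) V z = snd (V z) \<bullet> h
      - (\<Sum>j\<in>Basis. (fst (V z) \<bullet> j) * (\<Sum>a\<in>Basis. (snd z \<bullet> a) * Gam h j a (fst z)))"

(* connection coefficients: \<nabla>~_{E_a} E_b = \<Sum>_d omega a b d E_d *)
fun omega :: "('a::euclidean_space \<Rightarrow> 'a \<Rightarrow> 'a \<Rightarrow> 'a \<Rightarrow> real) \<Rightarrow> ('a \<Rightarrow> 'a \<Rightarrow> 'a \<Rightarrow> real)
     \<Rightarrow> 'a + 'a \<Rightarrow> 'a + 'a \<Rightarrow> 'a + 'a \<Rightarrow> 'a \<Rightarrow> real" where
  "omega Gam c (Inl i) (Inl j) (Inl h) x = Gam i j h x"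
| "omega Gam c (Inl i) (Inl j) (Inr h) x =
     (covc Gam c i j h x + covc Gam c j i h x - covc Gam c h i j x) / 2"
| "omega Gam c (Inl i) (Inr j) (Inr h) x = - Gam i h j x"
| "omega Gam c (Inl i) (Inr j) (Inl h) x = 0"
| "omega Gam c (Inr i) b d x = 0"

definition connT :: "('a::euclidean_space \<Rightarrow> 'a \<Rightarrow> 'a \<Rightarrow> 'a \<Rightarrow> real) \<Rightarrow> ('a \<Rightarrow> 'a \<Rightarrow> 'a \<Rightarrow> real)
     \<Rightarrow> ('a \<times> 'a \<Rightarrow> 'a \<times> 'a) \<Rightarrow> ('a \<times> 'a \<Rightarrow> 'a \<times> 'a) \<Rightarrow> 'a \<times> 'a \<Rightarrow> 'a \<times> 'a" where
  "connT Gam c X Y = (\<lambda>z.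
      (\<Sum>b\<in>adI. frechet_derivative (adC Gam b Y) (at z) (X z) *\<^sub>R adE Gam b z)
    + (\<Sum>a\<in>adI. \<Sum>b\<in>adI. \<Sum>d\<in>adI.
          (adC Gam a X z * adC Gam b Y z * omega Gam c a b d (fst z)) *\<^sub>R adE Gam d z))"

end

theory Submission
  imports Defs
begin


lemma pd_snoc: "pd (vs @ [v]) f = pd vs (\<lambda>x. frechet_derivative f (at x) v)"
  by (induction vs) auto

lemma fd_local:
  assumes "open V" "x \<in> V" "\<And>y. y \<in> V \<Longrightarrow> f y = g y"
  shows "frechet_derivative f (at x) = frechet_derivative g (at x)"
proof -
  have "\<And>D. (f has_derivative D) (at x) \<longleftrightarrow> (g has_derivative D) (at x)"
    using assms by (metis has_derivative_transform_within_open)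
  then show ?thesis unfolding frechet_derivative_def by simp
qed

lemma diff_local:
  assumes "f differentiable (at x)" "open V" "x \<in> V" "\<And>y. y \<in> V \<Longrightarrow> f y = g y"
  shows "g differentiable (at x)"
  using assms unfolding differentiable_def by (metis has_derivative_transform_within_open)

lemma pd_local:
  assumes "open V" "\<And>y. y \<in> V \<Longrightarrow> f y = g y" "x \<in> V"
  shows "pd vs f x = pd vs g x"
  using assms(3)
proof (induction vs arbitrary: x)
  case Nil then show ?case using assms by simp
next
  case (Cons v vs)
  have "frechet_derivative (pd vs f) (at x) = frechet_derivative (pd vs g) (at x)"
    by (rule fd_local[OF assms(1) Cons.prems]) (use Cons.IH in auto)
  then show ?case by simp
qed

lemma sm_local:
  assumes "open V" "sm_on V f" "\<And>y. y \<in> V \<Longrightarrow> f y = g y"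
  shows "sm_on V g"
  unfolding sm_on_def
proof (intro allI ballI)
  fix vs x assume x: "x \<in> V"
  have "pd vs f differentiable (at x)" using assms(2) x unfolding sm_on_def by blast
  then show "pd vs g differentiable (at x)"
    by (rule diff_local[OF _ assms(1) x]) (rule pd_local[OF assms(1,3)])
qed

lemma sm_D: "sm_on V f \<Longrightarrow> x \<in> V \<Longrightarrow> f differentiable (at x)"
  unfolding sm_on_def by (metis pd.simps(1))

lemma sm_dd: "sm_on V f \<Longrightarrow> sm_on V (\<lambda>x. frechet_derivative f (at x) v)"
  unfolding sm_on_def by (metis pd_snoc)

lemma sm_coind:
  assumes V: "open V"
    and step: "\<And>f. P f \<Longrightarrow> (\<forall>x\<in>V. f differentiable (at x)) \<and>
                  (\<forall>v. \<exists>g. P g \<and> (\<forall>x\<in>V. g x = frechet_derivative f (at x) v))"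
    and P: "P f"
  shows "sm_on V f"
proof -
  have key: "\<forall>f. P f \<longrightarrow> (\<exists>g. P g \<and> (\<forall>x\<in>V. pd vs f x = g x))" for vs
  proof (induction vs)
    case Nil then show ?case by auto
  next
    case (Cons v vs)
    show ?case
    proof (intro allI impI)
      fix f assume "P f"
      then obtain g where g: "P g" "\<forall>x\<in>V. pd vs f x = g x" using Cons.IH by blast
      then obtain g' where g': "P g'" "\<forall>x\<in>V. g' x = frechet_derivative g (at x) v"
        using step by blast
      have "\<forall>x\<in>V. pd (v # vs) f x = g' x"
      proof
        fix x assume x: "x \<in> V"
        have "frechet_derivative (pd vs f) (at x) = frechet_derivative g (at x)"
          by (rule fd_local[OF V x]) (use g in auto)
        then show "pd (v # vs) f x = g' x" using g' x by simp
      qed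
      then show "\<exists>g. P g \<and> (\<forall>x\<in>V. pd (v # vs) f x = g x)" using g' by blast
    qed
  qed
  show ?thesis unfolding sm_on_def
  proof (intro allI ballI)
    fix vs x assume x: "x \<in> V"
    obtain g where g: "P g" "\<forall>x\<in>V. pd vs f x = g x" using key P by blast
    have "g differentiable (at x)" using step g x by blast
    then show "pd vs f differentiable (at x)"
      by (rule diff_local[OF _ V x]) (use g in auto)
  qed
qed

lemma fd_at: "(f has_derivative f') (at x) \<Longrightarrow> frechet_derivative f (at x) v = f' v"
  using frechet_derivative_at by metis

lemma sm_const: "open V \<Longrightarrow> sm_on V (\<lambda>x. c)"
  by (rule sm_coind[where P="\<lambda>f. \<exists>c. f = (\<lambda>x. c)"]) auto

lemma sm_linear_fun: assumes "open V" "bounded_linear L" shows "sm_on V L"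
proof (rule sm_coind[where P="\<lambda>f. f = L \<or> (\<exists>c. f = (\<lambda>x. c))"])
  fix f assume "f = L \<or> (\<exists>c. f = (\<lambda>x. c))"
  then show "(\<forall>x\<in>V. f differentiable at x) \<and> (\<forall>v. \<exists>g. (g = L \<or> (\<exists>c. g = (\<lambda>x. c))) \<and> (\<forall>x\<in>V. g x = frechet_derivative f (at x) v))"
  proof
    assume f: "f = L"
    have d: "\<And>x. (L has_derivative L) (at x)" using assms(2) by (rule bounded_linear_imp_has_derivative)
    show ?thesis unfolding f
    proof (intro conjI allI)
      fix v show "\<exists>g. (g = L \<or> (\<exists>c. g = (\<lambda>x. c))) \<and> (\<forall>x\<in>V. g x = frechet_derivative L (at x) v)"
        by (rule exI[of _ "\<lambda>x. L v"]) (auto simp: fd_at[OF d])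
    qed (use d in \<open>auto simp: differentiable_def\<close>)
  qed auto
qed (use assms in auto)

lemma sm_linear:
  assumes V: "open V" and L: "bounded_linear L" and f: "sm_on V f"
  shows "sm_on V (\<lambda>x. L (f x))"
proof (rule sm_coind[where P="\<lambda>h. \<exists>f. sm_on V f \<and> h = (\<lambda>x. L (f x))"])
  fix h assume "\<exists>f. sm_on V f \<and> h = (\<lambda>x. L (f x))"
  then obtain f where f: "sm_on V f" and h: "h = (\<lambda>x. L (f x))" by blast
  have d: "((\<lambda>x. L (f x)) has_derivative (\<lambda>v. L (frechet_derivative f (at x) v))) (at x)" if "x \<in> V" for x
    using bounded_linear.has_derivative[OF L] sm_D[OF f that] frechet_derivative_works by blast
  show "(\<forall>x\<in>V. h differentiable at x) \<and> (\<forall>v. \<exists>g. (\<exists>f. sm_on V f \<and> g = (\<lambda>x. L (f x))) \<and> (\<forall>x\<in>V. g x = frechet_derivative h (at x) v))"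
    unfolding h
  proof (intro conjI allI)
    fix v show "\<exists>g. (\<exists>f. sm_on V f \<and> g = (\<lambda>x. L (f x))) \<and> (\<forall>x\<in>V. g x = frechet_derivative (\<lambda>x. L (f x)) (at x) v)"
      by (rule exI[of _ "\<lambda>x. L (frechet_derivative f (at x) v)"]) (use sm_dd[OF f] in \<open>auto simp: fd_at[OF d]\<close>)
  qed (use d in \<open>auto simp: differentiable_def\<close>)
qed (use assms in auto)


lemma sm_hasd: "sm_on V f \<Longrightarrow> x \<in> V \<Longrightarrow> (f has_derivative frechet_derivative f (at x)) (at x)"
  using sm_D frechet_derivative_works by blast

lemma sm_add:
  assumes V: "open V" and f: "sm_on V f" and g: "sm_on V g"
  shows "sm_on V (\<lambda>x. f x + g x)"
proof (rule sm_coind[where P="\<lambda>h. \<exists>f g. sm_on V f \<and> sm_on V g \<and> h = (\<lambda>x. f x + g x)"])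
  fix h assume "\<exists>f g. sm_on V f \<and> sm_on V g \<and> h = (\<lambda>x. f x + g x)"
  then obtain f g where f: "sm_on V f" and g: "sm_on V g" and h: "h = (\<lambda>x. f x + g x)" by blast
  have d: "((\<lambda>x. f x + g x) has_derivative (\<lambda>v. frechet_derivative f (at x) v + frechet_derivative g (at x) v)) (at x)" if "x \<in> V" for x
    using sm_hasd[OF f that] sm_hasd[OF g that] by (rule has_derivative_add)
  show "(\<forall>x\<in>V. h differentiable at x) \<and> (\<forall>v. \<exists>k. (\<exists>f g. sm_on V f \<and> sm_on V g \<and> k = (\<lambda>x. f x + g x)) \<and> (\<forall>x\<in>V. k x = frechet_derivative h (at x) v))"
    unfolding h
  proof (intro conjI allI)
    fix v show "\<exists>k. (\<exists>f g. sm_on V f \<and> sm_on V g \<and> k = (\<lambda>x. f x + g x)) \<and> (\<forall>x\<in>V. k x = frechet_derivative (\<lambda>x. f x + g x) (at x) v)"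
      by (rule exI[of _ "\<lambda>x. frechet_derivative f (at x) v + frechet_derivative g (at x) v"])
         (use sm_dd[OF f] sm_dd[OF g] in \<open>auto simp: fd_at[OF d]\<close>)
  qed (use d in \<open>auto simp: differentiable_def\<close>)
qed (use assms in auto)

lemma sm_sum:
  assumes V: "open V" and "\<And>i. i \<in> A \<Longrightarrow> sm_on V (f i)"
  shows "sm_on V (\<lambda>x. \<Sum>i\<in>A. f i x)"
  using assms(2)
proof (induction A rule: infinite_finite_induct)
  case (infinite A) then show ?case using sm_const[OF V] by simp
next
  case empty then show ?case using sm_const[OF V] by simp
next
  case (insert a A) then show ?case by (simp add: sm_add[OF V])
qed

inductive sps :: "('a::real_normed_vector \<Rightarrow> 'b::real_normed_vector \<Rightarrow> 'c::real_normed_vector)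
   \<Rightarrow> 'd::real_normed_vector set \<Rightarrow> ('d \<Rightarrow> 'c) \<Rightarrow> bool" for pr V where
  base: "sm_on V f \<Longrightarrow> sm_on V g \<Longrightarrow> sps pr V (\<lambda>x. pr (f x) (g x))"
| add: "sps pr V h1 \<Longrightarrow> sps pr V h2 \<Longrightarrow> sps pr V (\<lambda>x. h1 x + h2 x)"

lemma sps_step:
  fixes pr :: "'a::real_normed_vector \<Rightarrow> 'b::real_normed_vector \<Rightarrow> 'c::real_normed_vector"
    and V :: "'d::real_normed_vector set"
  assumes B: "bounded_bilinear pr" and h: "sps pr V h" and V: "open V"
  shows "(\<forall>x\<in>V. h differentiable at x) \<and> (\<forall>v. \<exists>k. sps pr V k \<and> (\<forall>x\<in>V. k x = frechet_derivative h (at x) v))"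
  using h
proof induction
  case (base f g)
  have d: "((\<lambda>x. pr (f x) (g x)) has_derivative (\<lambda>v. pr (f x) (frechet_derivative g (at x) v) + pr (frechet_derivative f (at x) v) (g x))) (at x)" if "x \<in> V" for x
    using bounded_bilinear.FDERIV[OF B sm_hasd[OF base(1) that] sm_hasd[OF base(2) that]] .
  show ?case
  proof (intro conjI allI)
    fix v show "\<exists>k. sps pr V k \<and> (\<forall>x\<in>V. k x = frechet_derivative (\<lambda>x. pr (f x) (g x)) (at x) v)"
      by (rule exI[of _ "\<lambda>x. pr (f x) (frechet_derivative g (at x) v) + pr (frechet_derivative f (at x) v) (g x)"])
         (use sm_dd[OF base(1)] sm_dd[OF base(2)] base(1,2) in \<open>auto simp: fd_at[OF d] intro!: sps.intros\<close>)
  qed (use d in \<open>auto simp: differentiable_def\<close>)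
next
  case (add h1 h2)
  have d: "((\<lambda>x. h1 x + h2 x) has_derivative (\<lambda>v. frechet_derivative h1 (at x) v + frechet_derivative h2 (at x) v)) (at x)" if "x \<in> V" for x
    using add.IH that frechet_derivative_works by (blast intro: has_derivative_add)
  show ?case
  proof (intro conjI allI)
    fix v
    obtain k1 where k1: "sps pr V k1" "\<forall>x\<in>V. k1 x = frechet_derivative h1 (at x) v" using add.IH by blast
    obtain k2 where k2: "sps pr V k2" "\<forall>x\<in>V. k2 x = frechet_derivative h2 (at x) v" using add.IH by blast
    show "\<exists>k. sps pr V k \<and> (\<forall>x\<in>V. k x = frechet_derivative (\<lambda>x. h1 x + h2 x) (at x) v)"
      by (rule exI[of _ "\<lambda>x. k1 x + k2 x"]) (use k1 k2 in \<open>auto simp: fd_at[OF d] intro!: sps.intros\<close>)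
  qed (use d in \<open>auto simp: differentiable_def\<close>)
qed

lemma sm_bilinear:
  assumes V: "open V" and B: "bounded_bilinear pr" and f: "sm_on V f" and g: "sm_on V g"
  shows "sm_on V (\<lambda>x. pr (f x) (g x))"
  by (rule sm_coind[where P="sps pr V", OF V sps_step[OF B _ V]]) (use f g in \<open>auto intro: sps.intros\<close>)

lemma sm_mult: "open V \<Longrightarrow> sm_on V f \<Longrightarrow> sm_on V g \<Longrightarrow> sm_on V (\<lambda>x. f x * g x :: real)"
  using sm_bilinear[OF _ bounded_bilinear_mult] .

lemma sm_scaleR: "open V \<Longrightarrow> sm_on V f \<Longrightarrow> sm_on V g \<Longrightarrow> sm_on V (\<lambda>x. f x *\<^sub>R g x)"
  using sm_bilinear[OF _ bounded_bilinear_scaleR] .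

lemma sm_inner: "open V \<Longrightarrow> sm_on V f \<Longrightarrow> sm_on V g \<Longrightarrow> sm_on V (\<lambda>x. f x \<bullet> g x)"
  using sm_bilinear[OF _ bounded_bilinear_inner] .

lemma sm_minus: "open V \<Longrightarrow> sm_on V f \<Longrightarrow> sm_on V (\<lambda>x. - f x)"
  using sm_linear[OF _ bounded_linear_minus[OF bounded_linear_ident]] by blast

lemma sm_diff: "open V \<Longrightarrow> sm_on V f \<Longrightarrow> sm_on V g \<Longrightarrow> sm_on V (\<lambda>x. f x - g x)"
  using sm_add[of V f "\<lambda>x. - g x"] sm_minus by (simp add: sm_minus)

lemma sm_fst: "open V \<Longrightarrow> sm_on V f \<Longrightarrow> sm_on V (\<lambda>x. fst (f x))"
  using sm_linear[OF _ bounded_linear_fst] .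

lemma sm_snd: "open V \<Longrightarrow> sm_on V f \<Longrightarrow> sm_on V (\<lambda>x. snd (f x))"
  using sm_linear[OF _ bounded_linear_snd] .

lemma sm_pair: assumes V: "open V" "sm_on V f" "sm_on V g" shows "sm_on V (\<lambda>x. (f x, g x))"
proof -
  have "sm_on V (\<lambda>x. (f x, 0) + (0, g x))"
    by (rule sm_add[OF V(1)]; rule sm_linear[OF V(1)])
       (auto intro: V bounded_linear_Pair bounded_linear_ident bounded_linear_zero)
  then show ?thesis by simp
qed

lemma sm_fst_comp:
  assumes U: "open U" and f: "sm_on U f"
  shows "sm_on (U \<times> (UNIV::'b::real_normed_vector set)) (\<lambda>z. f (fst z))"
proof (rule sm_coind[where P="\<lambda>h. \<exists>f. sm_on U f \<and> h = (\<lambda>z. f (fst z))"])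
  show "open (U \<times> (UNIV::'b set))" using U by (simp add: open_Times)
next
  fix h :: "_ \<times> 'b \<Rightarrow> _" assume "\<exists>f. sm_on U f \<and> h = (\<lambda>z. f (fst z))"
  then obtain f where f: "sm_on U f" and h: "h = (\<lambda>z. f (fst z))" by blast
  have d: "((\<lambda>z. f (fst z)) has_derivative (\<lambda>v. frechet_derivative f (at (fst z)) (fst v))) (at z)"
    if "z \<in> U \<times> (UNIV::'b set)" for z
  proof -
    have "fst z \<in> U" using that by (auto simp: mem_Times_iff)
    from has_derivative_compose[OF has_derivative_fst[OF has_derivative_ident[of "at z"]] sm_hasd[OF f this]]
    show ?thesis by simp
  qed
  show "(\<forall>x\<in>U \<times> UNIV. h differentiable at x) \<and> (\<forall>v. \<exists>k. (\<exists>f. sm_on U f \<and> k = (\<lambda>z. f (fst z))) \<and> (\<forall>x\<in>U \<times> UNIV. k x = frechet_derivative h (at x) v))"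
    unfolding h
  proof (intro conjI allI)
    fix v :: "_ \<times> 'b" show "\<exists>k. (\<exists>f. sm_on U f \<and> k = (\<lambda>z. f (fst z))) \<and> (\<forall>x\<in>U \<times> UNIV. k x = frechet_derivative (\<lambda>z. f (fst z)) (at x) v)"
      by (rule exI[of _ "\<lambda>z. frechet_derivative f (at (fst z)) (fst v)"])
         (use sm_dd[OF f] in \<open>auto simp: fd_at[OF d]\<close>)
  qed (use d in \<open>auto simp: differentiable_def\<close>)
qed (use assms in auto)



lemma schwarz_key:
  fixes f :: "'b::real_normed_vector \<Rightarrow> real"
  assumes V: "open V" and x: "x \<in> V"
    and fd: "\<And>y. y \<in> V \<Longrightarrow> (f has_derivative f' y) (at y)"
    and du: "((\<lambda>y. f' y u) has_derivative Su) (at x)"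
    and e: "e > 0"
  shows "\<exists>d>0. \<forall>t. 0 < t \<and> t < d \<longrightarrow>
     \<bar>(f (x + t *\<^sub>R u + t *\<^sub>R v) - f (x + t *\<^sub>R u) - f (x + t *\<^sub>R v) + f x) - t^2 * Su v\<bar> \<le> e * t^2"
proof -
  define K where "K = norm u + norm v + 1"
  have K: "K > 0" unfolding K_def by (simp add: add_nonneg_pos)
  have Sl: "linear Su" using du has_derivative_linear by blast
  have pos: "e / (2*K) > 0" using e K by simp
  have "\<forall>e>0. \<exists>d>0. \<forall>y. norm (y - x) < d \<longrightarrow> norm ((\<lambda>y. f' y u) y - (\<lambda>y. f' y u) x - Su (y - x)) \<le> e * norm (y - x)"
    using du unfolding has_derivative_at_alt by blast
  from this[rule_format, OF pos] obtain d1 where d1: "d1 > 0" and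
    d1': "\<And>y. norm (y - x) < d1 \<Longrightarrow> norm (f' y u - f' x u - Su (y - x)) \<le> (e / (2*K)) * norm (y - x)"
    by auto
  obtain r where r: "r > 0" "ball x r \<subseteq> V" using V x openE by blast
  define d where "d = min d1 r / K"
  have d: "d > 0" using d1 r K unfolding d_def by simp
  show ?thesis
  proof (intro exI[of _ d] conjI allI impI)
    show "d > 0" by (fact d)
    fix t :: real assume t: "0 < t \<and> t < d"
    have tK: "t * K < min d1 r" using t K unfolding d_def by (simp add: pos_less_divide_eq)
    have near: "norm (s *\<^sub>R u + w *\<^sub>R v) < min d1 r" if "0 \<le> s" "s \<le> t" "0 \<le> w" "w \<le> t" for s w
    proof -
      have "norm (s *\<^sub>R u + w *\<^sub>R v) \<le> s * norm u + w * norm v"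
        using norm_triangle_ineq[of "s *\<^sub>R u" "w *\<^sub>R v"] that by simp
      also have "\<dots> \<le> t * norm u + t * norm v"
        using that by (intro add_mono mult_right_mono) auto
      also have "\<dots> < t * K" using t unfolding K_def by (simp add: algebra_simps)
      finally show ?thesis using tK by simp
    qed
    define g where "g s = f (x + s *\<^sub>R u + t *\<^sub>R v) - f (x + s *\<^sub>R u)" for s
    define g' where "g' s = (\<lambda>h::real. h * (f' (x + s *\<^sub>R u + t *\<^sub>R v) u - f' (x + s *\<^sub>R u) u))" for s
    have gd: "(g has_derivative g' s) (at s within {0..t})" if "0 \<le> s" "s \<le> t" for s
    proof -
      have inV: "x + s *\<^sub>R u + w *\<^sub>R v \<in> V" if "0 \<le> w" "w \<le> t" for w
      proof -
        have "norm (s *\<^sub>R u + w *\<^sub>R v) < r" using near[OF \<open>0 \<le> s\<close> \<open>s \<le> t\<close> that] by simp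
        moreover have "dist x (x + s *\<^sub>R u + w *\<^sub>R v) = norm (s *\<^sub>R u + w *\<^sub>R v)"
          by (simp add: dist_norm norm_minus_commute add.assoc add.commute)
        ultimately have "x + s *\<^sub>R u + w *\<^sub>R v \<in> ball x r" by simp
        then show ?thesis using r by blast
      qed
      have p1: "x + s *\<^sub>R u + t *\<^sub>R v \<in> V" using inV[of t] t by simp
      have p0: "x + s *\<^sub>R u \<in> V" using inV[of 0] t by simp
      have l1: "linear (f' (x + s *\<^sub>R u + t *\<^sub>R v))" using fd[OF p1] has_derivative_linear by auto
      have l2: "linear (f' (x + s *\<^sub>R u))" using fd[OF p0] has_derivative_linear by auto
      have i1: "((\<lambda>s. x + s *\<^sub>R u + t *\<^sub>R v) has_derivative (\<lambda>h. h *\<^sub>R u)) (at s within {0..t})"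
        by (auto intro!: derivative_eq_intros)
      have i2: "((\<lambda>s. x + s *\<^sub>R u) has_derivative (\<lambda>h. h *\<^sub>R u)) (at s within {0..t})"
        by (auto intro!: derivative_eq_intros)
      have h1: "((\<lambda>s. f (x + s *\<^sub>R u + t *\<^sub>R v)) has_derivative (\<lambda>h. f' (x + s *\<^sub>R u + t *\<^sub>R v) (h *\<^sub>R u))) (at s within {0..t})"
        using has_derivative_compose[OF i1 fd[OF p1]] .
      have h2: "((\<lambda>s. f (x + s *\<^sub>R u)) has_derivative (\<lambda>h. f' (x + s *\<^sub>R u) (h *\<^sub>R u))) (at s within {0..t})"
        using has_derivative_compose[OF i2 fd[OF p0]] .
      show ?thesis unfolding g_def g'_def
        using has_derivative_diff[OF h1 h2] l1 l2
        by (simp add: linear_scale algebra_simps)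
    qed
    obtain s where s: "s \<in> {0<..<t}" and mv: "g t - g 0 = g' s (t - 0)"
      using mvt_simple[of 0 t g g'] gd t by auto
    define y1 where "y1 = x + s *\<^sub>R u + t *\<^sub>R v"
    define y2 where "y2 = x + s *\<^sub>R u"
    have n1: "norm (y1 - x) < d1" "norm (y1 - x) \<le> t * K"
    proof -
      show "norm (y1 - x) < d1" using near[of s t] s t unfolding y1_def by (simp add: add.assoc)
      have "norm (y1 - x) \<le> s * norm u + t * norm v"
        using norm_triangle_ineq[of "s *\<^sub>R u" "t *\<^sub>R v"] s t unfolding y1_def by (simp add: add.assoc)
      also have "\<dots> \<le> t * K" using s t mult_right_mono[of s t "norm u"] unfolding K_def by (simp add: algebra_simps)
      finally show "norm (y1 - x) \<le> t * K" .
    qed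
    have n2: "norm (y2 - x) < d1" "norm (y2 - x) \<le> t * K"
    proof -
      show "norm (y2 - x) < d1" using near[of s 0] s t unfolding y2_def by simp
      have "norm (y2 - x) \<le> s * norm u" using s unfolding y2_def by simp
      also have "\<dots> \<le> t * K"
      proof -
        have "t * K = t * norm u + t * norm v + t" unfolding K_def by (simp add: algebra_simps)
        moreover have "0 \<le> t * norm v" using t by simp
        moreover have "s * norm u \<le> t * norm u" using s by (intro mult_right_mono) auto
        ultimately show ?thesis using t by linarith
      qed
      finally show "norm (y2 - x) \<le> t * K" .
    qed
    have Sdiff: "Su (y1 - x) - Su (y2 - x) = t * Su v"
    proof -
      have "y1 - x = s *\<^sub>R u + t *\<^sub>R v" "y2 - x = s *\<^sub>R u" by (simp_all add: y1_def y2_def)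
      then show ?thesis using Sl by (simp add: linear_add linear_scale)
    qed
    have c: "0 \<le> e/(2*K)" using e K by simp
    have b1: "\<bar>f' y1 u - f' x u - Su (y1 - x)\<bar> \<le> (e/(2*K)) * (t * K)"
      using order_trans[OF d1'[OF n1(1)] mult_left_mono[OF n1(2) c]] by simp
    have b2: "\<bar>f' y2 u - f' x u - Su (y2 - x)\<bar> \<le> (e/(2*K)) * (t * K)"
      using order_trans[OF d1'[OF n2(1)] mult_left_mono[OF n2(2) c]] by simp
    have "(e/(2*K)) * (t * K) = e * t / 2" using K by (simp add: field_simps)
    then have bb: "\<bar>(f' y1 u - f' y2 u) - t * Su v\<bar> \<le> e * t"
    proof -
      have "(f' y1 u - f' y2 u) - t * Su v = (f' y1 u - f' x u - Su (y1 - x)) - (f' y2 u - f' x u - Su (y2 - x))"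
        using Sdiff by simp
      then have "\<bar>(f' y1 u - f' y2 u) - t * Su v\<bar> \<le> \<bar>f' y1 u - f' x u - Su (y1 - x)\<bar> + \<bar>f' y2 u - f' x u - Su (y2 - x)\<bar>"
        by (metis abs_triangle_ineq4)
      then show ?thesis using b1 b2 \<open>(e/(2*K)) * (t * K) = e * t / 2\<close> by linarith
    qed
    have "(f (x + t *\<^sub>R u + t *\<^sub>R v) - f (x + t *\<^sub>R u) - f (x + t *\<^sub>R v) + f x) = t * (f' y1 u - f' y2 u)"
      using mv unfolding g_def g'_def y1_def y2_def by simp
    then have "\<bar>(f (x + t *\<^sub>R u + t *\<^sub>R v) - f (x + t *\<^sub>R u) - f (x + t *\<^sub>R v) + f x) - t^2 * Su v\<bar>
        = t * \<bar>(f' y1 u - f' y2 u) - t * Su v\<bar>"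
    proof -
      have "(f (x + t *\<^sub>R u + t *\<^sub>R v) - f (x + t *\<^sub>R u) - f (x + t *\<^sub>R v) + f x) - t^2 * Su v
          = t * ((f' y1 u - f' y2 u) - t * Su v)"
        using \<open>(f (x + t *\<^sub>R u + t *\<^sub>R v) - f (x + t *\<^sub>R u) - f (x + t *\<^sub>R v) + f x) = t * (f' y1 u - f' y2 u)\<close>
        by (simp add: power2_eq_square algebra_simps)
      then show ?thesis using t by (simp add: abs_mult)
    qed
    also have "\<dots> \<le> t * (e * t)" using bb t by (simp add: mult_left_mono)
    finally show "\<bar>(f (x + t *\<^sub>R u + t *\<^sub>R v) - f (x + t *\<^sub>R u) - f (x + t *\<^sub>R v) + f x) - t^2 * Su v\<bar> \<le> e * t^2"
      by (simp add: power2_eq_square algebra_simps)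
  qed
qed

lemma schwarz:
  fixes f :: "'b::real_normed_vector \<Rightarrow> real"
  assumes V: "open V" and x: "x \<in> V"
    and fd: "\<And>y. y \<in> V \<Longrightarrow> (f has_derivative f' y) (at y)"
    and du: "((\<lambda>y. f' y u) has_derivative Su) (at x)"
    and dv: "((\<lambda>y. f' y v) has_derivative Sv) (at x)"
  shows "Su v = Sv u"
proof (rule ccontr)
  assume ne: "Su v \<noteq> Sv u"
  define e where "e = \<bar>Su v - Sv u\<bar> / 4"
  have e: "e > 0" using ne unfolding e_def by simp
  obtain d1 where d1: "d1 > 0" "\<forall>t. 0 < t \<and> t < d1 \<longrightarrow>
     \<bar>(f (x + t *\<^sub>R u + t *\<^sub>R v) - f (x + t *\<^sub>R u) - f (x + t *\<^sub>R v) + f x) - t^2 * Su v\<bar> \<le> e * t^2"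
    using schwarz_key[OF V x fd du e] by blast
  obtain d2 where d2: "d2 > 0" "\<forall>t. 0 < t \<and> t < d2 \<longrightarrow>
     \<bar>(f (x + t *\<^sub>R v + t *\<^sub>R u) - f (x + t *\<^sub>R v) - f (x + t *\<^sub>R u) + f x) - t^2 * Sv u\<bar> \<le> e * t^2"
    using schwarz_key[OF V x fd dv e] by blast
  define t where "t = min d1 d2 / 2"
  have t: "0 < t" "t < d1" "t < d2" using d1 d2 unfolding t_def by auto
  have eq: "x + t *\<^sub>R v + t *\<^sub>R u = x + t *\<^sub>R u + t *\<^sub>R v" by (simp add: algebra_simps)
  have "\<bar>t^2 * Su v - t^2 * Sv u\<bar> \<le> 2 * e * t^2"
  proof -
    have a: "\<bar>(f (x + t *\<^sub>R u + t *\<^sub>R v) - f (x + t *\<^sub>R u) - f (x + t *\<^sub>R v) + f x) - t^2 * Su v\<bar> \<le> e * t^2"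
      using d1(2)[rule_format, OF conjI[OF t(1) t(2)]] .
    have b: "\<bar>(f (x + t *\<^sub>R u + t *\<^sub>R v) - f (x + t *\<^sub>R v) - f (x + t *\<^sub>R u) + f x) - t^2 * Sv u\<bar> \<le> e * t^2"
      using d2(2)[rule_format, OF conjI[OF t(1) t(3)]] unfolding eq .
    show ?thesis using a b by linarith
  qed
  moreover have "\<bar>t^2 * Su v - t^2 * Sv u\<bar> = t^2 * \<bar>Su v - Sv u\<bar>"
  proof -
    have "t^2 * Su v - t^2 * Sv u = t^2 * (Su v - Sv u)" by (simp add: algebra_simps)
    then show ?thesis by (simp add: abs_mult)
  qed
  ultimately have "t^2 * \<bar>Su v - Sv u\<bar> \<le> t^2 * (2 * e)" by (simp add: ac_simps)
  then have "\<bar>Su v - Sv u\<bar> \<le> 2 * e" using t by simp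
  moreover have "\<bar>Su v - Sv u\<bar> = 4 * e" using e_def by simp
  ultimately show False using e by linarith
qed



lemma hasd_inner_const:
  "(g has_derivative g') F \<Longrightarrow> ((\<lambda>y. g y \<bullet> b) has_derivative (\<lambda>h. g' h \<bullet> b)) F"
  using bounded_linear.has_derivative[OF bounded_linear_inner_left] by blast

lemma fd_expand:
  fixes f :: "'b::euclidean_space \<Rightarrow> 'c::real_normed_vector"
  assumes "f differentiable (at z)"
  shows "frechet_derivative f (at z) a = (\<Sum>i\<in>Basis. (a \<bullet> i) *\<^sub>R frechet_derivative f (at z) i)"
proof -
  have lin: "linear (frechet_derivative f (at z))" using assms by (rule linear_frechet_derivative)
  have "frechet_derivative f (at z) (\<Sum>i\<in>Basis. (a \<bullet> i) *\<^sub>R i) = (\<Sum>i\<in>Basis. (a \<bullet> i) *\<^sub>R frechet_derivative f (at z) i)"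
    by (simp add: linear_sum[OF lin] linear_scale[OF lin])
  then show ?thesis by (simp add: euclidean_representation)
qed

lemma sm_schwarz:
  fixes Z :: "'b::euclidean_space \<Rightarrow> 'c::euclidean_space"
  assumes V: "open V" and Z: "sm_on V Z" and x: "x \<in> V"
  shows "frechet_derivative (\<lambda>y. frechet_derivative Z (at y) w) (at x) u
       = frechet_derivative (\<lambda>y. frechet_derivative Z (at y) u) (at x) w"
proof (rule euclidean_eqI)
  fix b :: 'c assume b: "b \<in> Basis"
  have fd: "((\<lambda>y. Z y \<bullet> b) has_derivative (\<lambda>h. frechet_derivative Z (at y) h \<bullet> b)) (at y)" if "y \<in> V" for y
    using hasd_inner_const[OF sm_hasd[OF Z that]] .
  have du: "((\<lambda>y. frechet_derivative Z (at y) u \<bullet> b) has_derivative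
      (\<lambda>h. frechet_derivative (\<lambda>y. frechet_derivative Z (at y) u) (at x) h \<bullet> b)) (at x)"
    using hasd_inner_const[OF sm_hasd[OF sm_dd[OF Z] x]] .
  have dw: "((\<lambda>y. frechet_derivative Z (at y) w \<bullet> b) has_derivative
      (\<lambda>h. frechet_derivative (\<lambda>y. frechet_derivative Z (at y) w) (at x) h \<bullet> b)) (at x)"
    using hasd_inner_const[OF sm_hasd[OF sm_dd[OF Z] x]] .
  show "frechet_derivative (\<lambda>y. frechet_derivative Z (at y) w) (at x) u \<bullet> b
       = frechet_derivative (\<lambda>y. frechet_derivative Z (at y) u) (at x) w \<bullet> b"
    using schwarz[OF V x fd du dw] by simp
qed

lemma sm_inner_const: "open V \<Longrightarrow> sm_on V f \<Longrightarrow> sm_on V (\<lambda>x. f x \<bullet> b)"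
  using sm_linear[OF _ bounded_linear_inner_left] .

lemma sm_scaleR_const: "open V \<Longrightarrow> sm_on V f \<Longrightarrow> sm_on V (\<lambda>x. f x *\<^sub>R b)"
  using sm_scaleR[OF _ _ sm_const] .

definition Rm :: "('b::euclidean_space \<Rightarrow> 'b \<Rightarrow> 'b \<Rightarrow> 'b) \<Rightarrow> 'b \<Rightarrow> 'b \<Rightarrow> 'b \<Rightarrow> 'b \<Rightarrow> 'b" where
  "Rm G z u v w = frechet_derivative (\<lambda>y. G y v w) (at z) u - frechet_derivative (\<lambda>y. G y u w) (at z) v
     + G z u (G z v w) - G z v (G z u w)"

definition Rc :: "('b::euclidean_space \<Rightarrow> 'b \<Rightarrow> 'b \<Rightarrow> 'b) \<Rightarrow> 'b \<Rightarrow> 'b \<Rightarrow> 'b \<Rightarrow> real" where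
  "Rc G z v w = (\<Sum>b\<in>Basis. Rm G z b v w \<bullet> b)"

locale cconn =
  fixes V :: "'b::euclidean_space set" and G :: "'b \<Rightarrow> 'b \<Rightarrow> 'b \<Rightarrow> 'b"
    and D :: "('b \<Rightarrow> 'b) \<Rightarrow> ('b \<Rightarrow> 'b) \<Rightarrow> 'b \<Rightarrow> 'b"
  assumes V: "open V"
    and Gbil: "\<And>z. z \<in> V \<Longrightarrow> bilinear (G z)"
    and Gsm: "\<And>i j. i \<in> Basis \<Longrightarrow> j \<in> Basis \<Longrightarrow> sm_on V (\<lambda>z. G z i j)"
    and DG: "\<And>X Y z. sm_on V X \<Longrightarrow> sm_on V Y \<Longrightarrow> z \<in> V \<Longrightarrow>
               D X Y z = frechet_derivative Y (at z) (X z) + G z (X z) (Y z)"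
begin

lemma G_expand:
  assumes z: "z \<in> V"
  shows "G z a b = (\<Sum>i\<in>Basis. \<Sum>j\<in>Basis. ((a \<bullet> i) * (b \<bullet> j)) *\<^sub>R G z i j)"
proof -
  have bl: "bilinear (G z)" using Gbil[OF z] .
  have "G z a b = G z (\<Sum>i\<in>Basis. (a \<bullet> i) *\<^sub>R i) (\<Sum>j\<in>Basis. (b \<bullet> j) *\<^sub>R j)"
    by (simp add: euclidean_representation)
  also have "\<dots> = (\<Sum>(i,j)\<in>Basis \<times> Basis. G z ((a \<bullet> i) *\<^sub>R i) ((b \<bullet> j) *\<^sub>R j))"
    by (rule bilinear_sum[OF bl])
  also have "\<dots> = (\<Sum>(i,j)\<in>Basis \<times> Basis. ((a \<bullet> i) * (b \<bullet> j)) *\<^sub>R G z i j)"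
    by (simp add: bilinear_lmul[OF bl] bilinear_rmul[OF bl] mult.commute)
  also have "\<dots> = (\<Sum>i\<in>Basis. \<Sum>j\<in>Basis. ((a \<bullet> i) * (b \<bullet> j)) *\<^sub>R G z i j)"
    by (simp add: sum.cartesian_product mult.commute)
  finally show ?thesis .
qed

lemma G_sm:
  fixes X Y :: "'b \<Rightarrow> 'b"
  assumes X: "sm_on V X" and Y: "sm_on V Y"
  shows "sm_on V (\<lambda>z. G z (X z) (Y z))"
proof (rule sm_local[OF V _ G_expand[symmetric]])
  show "sm_on V (\<lambda>z. \<Sum>i\<in>Basis. \<Sum>j\<in>Basis. ((X z \<bullet> i) * (Y z \<bullet> j)) *\<^sub>R G z i j)"
    by (intro sm_sum[OF V] sm_scaleR[OF V] sm_mult[OF V] sm_inner_const[OF V] X Y Gsm)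
qed

lemma fdv_sm:
  fixes X Y :: "'b \<Rightarrow> 'b"
  assumes X: "sm_on V X" and Y: "sm_on V Y"
  shows "sm_on V (\<lambda>z. frechet_derivative Y (at z) (X z))"
proof (rule sm_local[OF V])
  show "sm_on V (\<lambda>z. \<Sum>i\<in>Basis. (X z \<bullet> i) *\<^sub>R frechet_derivative Y (at z) i)"
    by (intro sm_sum[OF V] sm_scaleR[OF V] sm_inner_const[OF V] X sm_dd[OF Y])
  show "\<And>z. z \<in> V \<Longrightarrow> (\<Sum>i\<in>Basis. (X z \<bullet> i) *\<^sub>R frechet_derivative Y (at z) i) = frechet_derivative Y (at z) (X z)"
    using fd_expand sm_D[OF Y] by metis
qed

lemma D_sm: "sm_on V (X::'b\<Rightarrow>'b) \<Longrightarrow> sm_on V Y \<Longrightarrow> sm_on V (D X Y)"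
  by (rule sm_local[OF V sm_add[OF V fdv_sm G_sm]]) (auto simp: DG)

lemma lie_sm: "sm_on V (X::'b\<Rightarrow>'b) \<Longrightarrow> sm_on V Y \<Longrightarrow> sm_on V (lie X Y)"
  unfolding lie_def by (intro sm_diff[OF V] fdv_sm)

lemma curv_sm: "sm_on V (X::'b\<Rightarrow>'b) \<Longrightarrow> sm_on V Y \<Longrightarrow> sm_on V Z \<Longrightarrow> sm_on V (curv D X Y Z)"
  unfolding curv_def by (intro sm_diff[OF V] D_sm lie_sm)

lemma DGf_expand:
  assumes z: "z \<in> V"
  shows "frechet_derivative (\<lambda>y. G y a b) (at z) h =
     (\<Sum>i\<in>Basis. \<Sum>j\<in>Basis. ((a \<bullet> i) * (b \<bullet> j)) *\<^sub>R frechet_derivative (\<lambda>y. G y i j) (at z) h)"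
proof -
  have "frechet_derivative (\<lambda>y. G y a b) (at z) = frechet_derivative (\<lambda>y. \<Sum>i\<in>Basis. \<Sum>j\<in>Basis. ((a \<bullet> i) * (b \<bullet> j)) *\<^sub>R G y i j) (at z)"
    by (rule fd_local[OF V z G_expand])
  moreover have "((\<lambda>y. \<Sum>i\<in>Basis. \<Sum>j\<in>Basis. ((a \<bullet> i) * (b \<bullet> j)) *\<^sub>R G y i j) has_derivative
     (\<lambda>h. \<Sum>i\<in>Basis. \<Sum>j\<in>Basis. ((a \<bullet> i) * (b \<bullet> j)) *\<^sub>R frechet_derivative (\<lambda>y. G y i j) (at z) h)) (at z)"
    by (intro has_derivative_sum has_derivative_scaleR_right sm_hasd[OF Gsm z])
  ultimately show ?thesis by (simp add: fd_at)
qed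

lemma E1:
  fixes X Y Z :: "'b \<Rightarrow> 'b"
  assumes Y: "sm_on V Y" and Z: "sm_on V Z" and z: "z \<in> V"
  shows "((\<lambda>y. frechet_derivative Z (at y) (Y y)) has_derivative
    (\<lambda>h. frechet_derivative Z (at z) (frechet_derivative Y (at z) h)
       + (\<Sum>i\<in>Basis. (Y z \<bullet> i) *\<^sub>R frechet_derivative (\<lambda>y. frechet_derivative Z (at y) i) (at z) h))) (at z)"
proof -
  have "((\<lambda>y. \<Sum>i\<in>Basis. (Y y \<bullet> i) *\<^sub>R frechet_derivative Z (at y) i) has_derivative
    (\<lambda>h. \<Sum>i\<in>Basis. (Y z \<bullet> i) *\<^sub>R frechet_derivative (\<lambda>y. frechet_derivative Z (at y) i) (at z) h
        + (frechet_derivative Y (at z) h \<bullet> i) *\<^sub>R frechet_derivative Z (at z) i)) (at z)"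
    by (intro has_derivative_sum has_derivative_scaleR hasd_inner_const sm_hasd[OF Y z] sm_hasd[OF sm_dd[OF Z] z])
  then have "((\<lambda>y. \<Sum>i\<in>Basis. (Y y \<bullet> i) *\<^sub>R frechet_derivative Z (at y) i) has_derivative
    (\<lambda>h. frechet_derivative Z (at z) (frechet_derivative Y (at z) h)
       + (\<Sum>i\<in>Basis. (Y z \<bullet> i) *\<^sub>R frechet_derivative (\<lambda>y. frechet_derivative Z (at y) i) (at z) h))) (at z)"
    by (rule has_derivative_eq_rhs) (simp only: sum.distrib fd_expand[OF sm_D[OF Z z], symmetric] add.commute)
  then show ?thesis
    by (rule has_derivative_transform_within_open[OF _ V z]) (metis fd_expand sm_D[OF Z])
qed

lemma E2:
  fixes X Y Z :: "'b \<Rightarrow> 'b"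
  assumes Y: "sm_on V Y" and Z: "sm_on V Z" and z: "z \<in> V"
  shows "((\<lambda>y. G y (Y y) (Z y)) has_derivative
    (\<lambda>h. G z (frechet_derivative Y (at z) h) (Z z) + G z (Y z) (frechet_derivative Z (at z) h)
        + frechet_derivative (\<lambda>y. G y (Y z) (Z z)) (at z) h)) (at z)"
proof -
  have "((\<lambda>y. \<Sum>i\<in>Basis. \<Sum>j\<in>Basis. ((Y y \<bullet> i) * (Z y \<bullet> j)) *\<^sub>R G y i j) has_derivative
    (\<lambda>h. \<Sum>i\<in>Basis. \<Sum>j\<in>Basis. ((Y z \<bullet> i) * (Z z \<bullet> j)) *\<^sub>R frechet_derivative (\<lambda>y. G y i j) (at z) h
      + ((Y z \<bullet> i) * (frechet_derivative Z (at z) h \<bullet> j) + (frechet_derivative Y (at z) h \<bullet> i) * (Z z \<bullet> j)) *\<^sub>R G z i j)) (at z)"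
    by (intro has_derivative_sum has_derivative_scaleR has_derivative_mult hasd_inner_const
        sm_hasd[OF Y z] sm_hasd[OF Z z] sm_hasd[OF Gsm z])
  then have "((\<lambda>y. \<Sum>i\<in>Basis. \<Sum>j\<in>Basis. ((Y y \<bullet> i) * (Z y \<bullet> j)) *\<^sub>R G y i j) has_derivative
    (\<lambda>h. G z (frechet_derivative Y (at z) h) (Z z) + G z (Y z) (frechet_derivative Z (at z) h)
        + frechet_derivative (\<lambda>y. G y (Y z) (Z z)) (at z) h)) (at z)"
    by (rule has_derivative_eq_rhs)
       (simp only: sum.distrib scaleR_add_left G_expand[OF z, symmetric] DGf_expand[OF z, symmetric] add_ac)
  then show ?thesis
    by (rule has_derivative_transform_within_open[OF _ V z]) (rule G_expand[symmetric])
qed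

lemma D2_swap:
  fixes X Y Z :: "'b \<Rightarrow> 'b"
  assumes Z: "sm_on V Z" and z: "z \<in> V"
  shows "(\<Sum>i\<in>Basis. (a \<bullet> i) *\<^sub>R frechet_derivative (\<lambda>y. frechet_derivative Z (at y) i) (at z) b)
       = (\<Sum>i\<in>Basis. (b \<bullet> i) *\<^sub>R frechet_derivative (\<lambda>y. frechet_derivative Z (at y) i) (at z) a)"
proof -
  let ?S = "\<lambda>i l. frechet_derivative (\<lambda>y. frechet_derivative Z (at y) i) (at z) l"
  have e: "?S i c = (\<Sum>l\<in>Basis. (c \<bullet> l) *\<^sub>R ?S i l)" for i c
    using fd_expand[OF sm_D[OF sm_dd[OF Z] z]] .
  have sym: "?S i l = ?S l i" for i l using sm_schwarz[OF V Z z] by metis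
  have "(\<Sum>i\<in>Basis. (a \<bullet> i) *\<^sub>R ?S i b) = (\<Sum>i\<in>Basis. \<Sum>l\<in>Basis. ((a \<bullet> i) * (b \<bullet> l)) *\<^sub>R ?S i l)"
    by (subst e) (simp add: scaleR_sum_right)
  also have "\<dots> = (\<Sum>l\<in>Basis. \<Sum>i\<in>Basis. ((a \<bullet> i) * (b \<bullet> l)) *\<^sub>R ?S l i)"
    by (subst sum.swap) (simp add: sym)
  also have "\<dots> = (\<Sum>i\<in>Basis. (b \<bullet> i) *\<^sub>R ?S i a)"
    by (subst e) (simp add: scaleR_sum_right mult.commute)
  finally show ?thesis .
qed

lemma curv_eq:
  fixes X Y Z :: "'b \<Rightarrow> 'b"
  assumes X: "sm_on V X" and Y: "sm_on V Y" and Z: "sm_on V Z" and z: "z \<in> V"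
  shows "curv D X Y Z z = Rm G z (X z) (Y z) (Z z)"
proof -
  have bl: "bilinear (G z)" using Gbil[OF z] .
  have lZ: "linear (frechet_derivative Z (at z))" using sm_D[OF Z z] by (rule linear_frechet_derivative)
  have dD: "((D A B) has_derivative (\<lambda>h. frechet_derivative B (at z) (frechet_derivative A (at z) h)
       + (\<Sum>i\<in>Basis. (A z \<bullet> i) *\<^sub>R frechet_derivative (\<lambda>y. frechet_derivative B (at y) i) (at z) h)
       + (G z (frechet_derivative A (at z) h) (B z) + G z (A z) (frechet_derivative B (at z) h)
        + frechet_derivative (\<lambda>y. G y (A z) (B z)) (at z) h))) (at z)"
    if A: "sm_on V A" and B: "sm_on V B" for A B
    by (rule has_derivative_transform_within_open[OF has_derivative_add[OF E1[OF A B z] E2[OF A B z]] V z])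
       (simp add: DG[OF A B])
  have 1: "D X (D Y Z) z = frechet_derivative Z (at z) (frechet_derivative Y (at z) (X z))
       + (\<Sum>i\<in>Basis. (Y z \<bullet> i) *\<^sub>R frechet_derivative (\<lambda>y. frechet_derivative Z (at y) i) (at z) (X z))
       + (G z (frechet_derivative Y (at z) (X z)) (Z z) + G z (Y z) (frechet_derivative Z (at z) (X z))
        + frechet_derivative (\<lambda>y. G y (Y z) (Z z)) (at z) (X z))
       + G z (X z) (frechet_derivative Z (at z) (Y z) + G z (Y z) (Z z))"
    using DG[OF X D_sm[OF Y Z] z] fd_at[OF dD[OF Y Z]] DG[OF Y Z z] by simp
  have 2: "D Y (D X Z) z = frechet_derivative Z (at z) (frechet_derivative X (at z) (Y z))
       + (\<Sum>i\<in>Basis. (X z \<bullet> i) *\<^sub>R frechet_derivative (\<lambda>y. frechet_derivative Z (at y) i) (at z) (Y z))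
       + (G z (frechet_derivative X (at z) (Y z)) (Z z) + G z (X z) (frechet_derivative Z (at z) (Y z))
        + frechet_derivative (\<lambda>y. G y (X z) (Z z)) (at z) (Y z))
       + G z (Y z) (frechet_derivative Z (at z) (X z) + G z (X z) (Z z))"
    using DG[OF Y D_sm[OF X Z] z] fd_at[OF dD[OF X Z]] DG[OF X Z z] by simp
  have 3: "D (lie X Y) Z z = frechet_derivative Z (at z) (frechet_derivative Y (at z) (X z) - frechet_derivative X (at z) (Y z))
       + G z (frechet_derivative Y (at z) (X z) - frechet_derivative X (at z) (Y z)) (Z z)"
    using DG[OF lie_sm[OF X Y] Z z] by (simp add: lie_def)
  show ?thesis
    unfolding curv_def Rm_def 1 2 3
    using D2_swap[OF Z z, of "Y z" "X z"]
    by (simp add: linear_diff[OF lZ] bilinear_lsub[OF bl] bilinear_radd[OF bl] algebra_simps)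
qed

lemma ric_eq:
  fixes X Y Z :: "'b \<Rightarrow> 'b"
  assumes Y: "sm_on V Y" and Z: "sm_on V Z" and z: "z \<in> V"
  shows "ric D Y Z z = Rc G z (Y z) (Z z)"
  unfolding ric_def Rc_def using curv_eq[OF sm_const[OF V] Y Z z] by simp

lemma semisym_iff:
  "ricci_semisym V D \<longleftrightarrow>
    (\<forall>z\<in>V. \<forall>u v w t. - Rc G z (Rm G z u v w) t - Rc G z w (Rm G z u v t) = 0)"
proof
  assume H: "ricci_semisym V D"
  show "\<forall>z\<in>V. \<forall>u v w t. - Rc G z (Rm G z u v w) t - Rc G z w (Rm G z u v t) = 0"
  proof (intro ballI allI)
    fix z u v w t assume z: "z \<in> V"
    have c: "sm_on V (\<lambda>_. a)" for a using sm_const[OF V] .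
    have "- ric D (curv D (\<lambda>_. u) (\<lambda>_. v) (\<lambda>_. w)) (\<lambda>_. t) z - ric D (\<lambda>_. w) (curv D (\<lambda>_. u) (\<lambda>_. v) (\<lambda>_. t)) z = 0"
      using H z c unfolding ricci_semisym_def by blast
    then show "- Rc G z (Rm G z u v w) t - Rc G z w (Rm G z u v t) = 0"
      using z by (simp add: ric_eq[OF curv_sm[OF c c c] c z] ric_eq[OF c curv_sm[OF c c c] z] curv_eq[OF c c c z])
  qed
next
  assume H: "\<forall>z\<in>V. \<forall>u v w t. - Rc G z (Rm G z u v w) t - Rc G z w (Rm G z u v t) = 0"
  show "ricci_semisym V D" unfolding ricci_semisym_def
  proof (intro allI impI ballI)
    fix X Y Z W :: "'b \<Rightarrow> 'b" and x assume sm: "sm_on V X \<and> sm_on V Y \<and> sm_on V Z \<and> sm_on V W" and x: "x \<in> V"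
    then show "- ric D (curv D X Y Z) W x - ric D Z (curv D X Y W) x = 0"
      using H x by (simp add: ric_eq curv_sm curv_eq)
  qed
qed

end



lemma sum_adI: "(\<Sum>b\<in>adI. f b) = (\<Sum>j\<in>Basis. f (Inl j)) + (\<Sum>j\<in>Basis. f (Inr j))"
proof -
  have "(\<Sum>b\<in>adI. f b) = sum f (Inl ` Basis) + sum f (Inr ` Basis)"
    unfolding adI_def by (rule sum.union_disjoint) auto
  also have "\<dots> = (\<Sum>j\<in>Basis. f (Inl j)) + (\<Sum>j\<in>Basis. f (Inr j))"
    by (simp add: sum.reindex)
  finally show ?thesis .
qed

lemma inner_sum_basis:
  fixes f :: "'a::euclidean_space \<Rightarrow> real"
  assumes "m \<in> Basis"
  shows "(\<Sum>h\<in>Basis. f h *\<^sub>R h) \<bullet> m = f m"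
proof -
  have "(\<Sum>h\<in>Basis. f h *\<^sub>R h) \<bullet> m = (\<Sum>h\<in>Basis. f h * (h \<bullet> m))" by (simp add: inner_sum_left)
  also have "\<dots> = (\<Sum>h\<in>Basis. if h = m then f h else 0)"
    by (rule sum.cong) (use assms in \<open>auto simp: inner_Basis\<close>)
  also have "\<dots> = f m" using assms by simp
  finally show ?thesis .
qed

lemma bilinear_coef:
  fixes C :: "'a::euclidean_space \<Rightarrow> 'a \<Rightarrow> 'c::real_vector"
  shows "bilinear (\<lambda>a b. \<Sum>i\<in>Basis. \<Sum>j\<in>Basis. ((a \<bullet> i) * (b \<bullet> j)) *\<^sub>R C i j)"
  unfolding bilinear_def
  by (auto intro!: linearI simp: inner_add_left algebra_simps sum.distrib scaleR_sum_right)

definition GM :: "('a::euclidean_space \<Rightarrow> 'a \<Rightarrow> 'a \<Rightarrow> 'a \<Rightarrow> real) \<Rightarrow> 'a \<Rightarrow> 'a \<Rightarrow> 'a \<Rightarrow> 'a" where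
  "GM Gam x a b = (\<Sum>i\<in>Basis. \<Sum>j\<in>Basis. \<Sum>h\<in>Basis. (Gam i j h x * (a \<bullet> i) * (b \<bullet> j)) *\<^sub>R h)"

lemma GM_coef: "GM Gam x a b = (\<Sum>i\<in>Basis. \<Sum>j\<in>Basis. ((a \<bullet> i) * (b \<bullet> j)) *\<^sub>R (\<Sum>h\<in>Basis. Gam i j h x *\<^sub>R h))"
  unfolding GM_def by (simp add: scaleR_sum_right mult.commute mult.left_commute)

lemma GM_bil: "bilinear (GM Gam x)"
proof -
  have "GM Gam x = (\<lambda>a b. \<Sum>i\<in>Basis. \<Sum>j\<in>Basis. ((a \<bullet> i) * (b \<bullet> j)) *\<^sub>R (\<Sum>h\<in>Basis. Gam i j h x *\<^sub>R h))"
    by (intro ext) (rule GM_coef)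
  then show ?thesis by (simp only: bilinear_coef)
qed

lemma GM_inner: "m \<in> Basis \<Longrightarrow> GM Gam x a b \<bullet> m = (\<Sum>i\<in>Basis. \<Sum>j\<in>Basis. Gam i j m x * (a \<bullet> i) * (b \<bullet> j))"
  unfolding GM_def by (simp add: inner_sum_left inner_Basis if_distrib cong: if_cong)

definition aa :: "('a::euclidean_space \<Rightarrow> 'a \<Rightarrow> 'a \<Rightarrow> 'a \<Rightarrow> real) \<Rightarrow> 'a \<Rightarrow> 'a \<Rightarrow> 'a \<times> 'a \<Rightarrow> real" where
  "aa Gam h j z = (\<Sum>k\<in>Basis. (snd z \<bullet> k) * Gam h j k (fst z))"

definition daa :: "('a::euclidean_space \<Rightarrow> 'a \<Rightarrow> 'a \<Rightarrow> 'a \<Rightarrow> real) \<Rightarrow> 'a \<Rightarrow> 'a \<Rightarrow> 'a \<times> 'a \<Rightarrow> 'a \<times> 'a \<Rightarrow> real" where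
  "daa Gam h j z d = (\<Sum>k\<in>Basis. (snd d \<bullet> k) * Gam h j k (fst z)
       + (snd z \<bullet> k) * frechet_derivative (Gam h j k) (at (fst z)) (fst d))"

definition Cc :: "('a::euclidean_space \<Rightarrow> 'a \<Rightarrow> 'a \<Rightarrow> 'a \<Rightarrow> real) \<Rightarrow> ('a \<Rightarrow> 'a \<Rightarrow> 'a \<Rightarrow> real) \<Rightarrow> 'a \<Rightarrow> 'a \<Rightarrow> 'a \<Rightarrow> 'a \<Rightarrow> real" where
  "Cc Gam c i j h x = (covc Gam c i j h x + covc Gam c j i h x - covc Gam c h i j x) / 2"

definition NT0 :: "('a::euclidean_space \<Rightarrow> 'a \<Rightarrow> 'a \<Rightarrow> 'a \<Rightarrow> real) \<Rightarrow> ('a \<Rightarrow> 'a \<Rightarrow> 'a \<Rightarrow> real)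
   \<Rightarrow> 'a \<Rightarrow> 'a \<times> 'a \<Rightarrow> 'a \<times> 'a \<Rightarrow> 'a \<times> 'a \<Rightarrow> real" where
  "NT0 Gam c h z a b =
     (\<Sum>i\<in>Basis. \<Sum>j\<in>Basis. (fst a \<bullet> i) * (fst b \<bullet> j) * (\<Sum>l\<in>Basis. Gam i j l (fst z) * aa Gam h l z))
   + (\<Sum>i\<in>Basis. \<Sum>j\<in>Basis. (fst a \<bullet> i) * (fst b \<bullet> j) * Cc Gam c i j h (fst z))
   - (\<Sum>i\<in>Basis. \<Sum>j\<in>Basis. (fst a \<bullet> i) * (snd b \<bullet> j - (\<Sum>k\<in>Basis. (fst b \<bullet> k) * aa Gam j k z)) * Gam i h j (fst z))"

definition NT :: "('a::euclidean_space \<Rightarrow> 'a \<Rightarrow> 'a \<Rightarrow> 'a \<Rightarrow> real) \<Rightarrow> ('a \<Rightarrow> 'a \<Rightarrow> 'a \<Rightarrow> real)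
   \<Rightarrow> 'a \<Rightarrow> 'a \<times> 'a \<Rightarrow> 'a \<times> 'a \<Rightarrow> 'a \<times> 'a \<Rightarrow> real" where
  "NT Gam c h z a b = NT0 Gam c h z a b - (\<Sum>j\<in>Basis. (fst b \<bullet> j) * daa Gam h j z a)"

definition GT :: "('a::euclidean_space \<Rightarrow> 'a \<Rightarrow> 'a \<Rightarrow> 'a \<Rightarrow> real) \<Rightarrow> ('a \<Rightarrow> 'a \<Rightarrow> 'a \<Rightarrow> real)
   \<Rightarrow> 'a \<times> 'a \<Rightarrow> 'a \<times> 'a \<Rightarrow> 'a \<times> 'a \<Rightarrow> 'a \<times> 'a" where
  "GT Gam c z a b = (GM Gam (fst z) (fst a) (fst b), \<Sum>h\<in>Basis. NT Gam c h z a b *\<^sub>R h)"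

locale tstar =
  fixes U :: "'a::euclidean_space set"
    and Gam :: "'a \<Rightarrow> 'a \<Rightarrow> 'a \<Rightarrow> 'a \<Rightarrow> real"
    and c :: "'a \<Rightarrow> 'a \<Rightarrow> 'a \<Rightarrow> real"
  assumes U: "open U"
    and Gsm: "\<forall>i\<in>Basis. \<forall>j\<in>Basis. \<forall>h\<in>Basis. sm_on U (Gam i j h)"
    and Gsym: "\<forall>i\<in>Basis. \<forall>j\<in>Basis. \<forall>h\<in>Basis. \<forall>x\<in>U. Gam i j h x = Gam j i h x"
    and csm: "\<forall>i\<in>Basis. \<forall>j\<in>Basis. sm_on U (c i j)"
    and csym: "\<forall>i\<in>Basis. \<forall>j\<in>Basis. \<forall>x\<in>U. c i j x = c j i x"
begin

lemma Gsm': "i \<in> Basis \<Longrightarrow> j \<in> Basis \<Longrightarrow> h \<in> Basis \<Longrightarrow> sm_on U (Gam i j h)"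
  using Gsm by blast

lemma GM_sm: "i \<in> Basis \<Longrightarrow> j \<in> Basis \<Longrightarrow> sm_on U (\<lambda>x. GM Gam x i j)"
  unfolding GM_def
  by (intro sm_sum[OF U] sm_scaleR_const[OF U] sm_mult[OF U] sm_const[OF U]) (auto intro: Gsm')

lemma M_cconn: "cconn U (GM Gam) (connM Gam)"
proof
  show "open U" by (fact U)
  show "\<And>z. z \<in> U \<Longrightarrow> bilinear (GM Gam z)" by (rule GM_bil)
  show "\<And>i j. i \<in> Basis \<Longrightarrow> j \<in> Basis \<Longrightarrow> sm_on U (\<lambda>z. GM Gam z i j)" by (rule GM_sm)
  show "\<And>X Y z. connM Gam X Y z = frechet_derivative Y (at z) (X z) + GM Gam z (X z) (Y z)"
    unfolding connM_def GM_def by simp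
qed

lemma UV: "open (U \<times> (UNIV :: 'a set))" using U by (simp add: open_Times)

lemma aa_hasd:
  assumes h: "h \<in> Basis" and j: "j \<in> Basis" and z: "fst z \<in> U"
  shows "(aa Gam h j has_derivative daa Gam h j z) (at z)"
proof -
  have g: "((\<lambda>y. Gam h j k (fst y)) has_derivative (\<lambda>d. frechet_derivative (Gam h j k) (at (fst z)) (fst d))) (at z)"
    if k: "k \<in> Basis" for k
    using has_derivative_compose[OF has_derivative_fst[OF has_derivative_ident[of "at z"]] sm_hasd[OF Gsm'[OF h j k] z]] by simp
  have "((\<lambda>y. \<Sum>k\<in>Basis. (snd y \<bullet> k) * Gam h j k (fst y)) has_derivative
      (\<lambda>d. \<Sum>k\<in>Basis. (snd z \<bullet> k) * frechet_derivative (Gam h j k) (at (fst z)) (fst d) + (snd d \<bullet> k) * Gam h j k (fst z))) (at z)"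
    by (intro has_derivative_sum has_derivative_mult hasd_inner_const has_derivative_snd has_derivative_ident g)
  then show ?thesis unfolding aa_def[abs_def] daa_def[abs_def]
    by (rule has_derivative_eq_rhs) (simp add: add.commute)
qed

end



lemma sum_inner_basis1: "m \<in> Basis \<Longrightarrow> (\<Sum>h\<in>Basis. f h * (h \<bullet> (m::'a::euclidean_space))) = f m"
  using inner_sum_basis[of m f] by (simp add: inner_sum_left)

lemma sum_inner_basis2: "m \<in> Basis \<Longrightarrow> (\<Sum>h\<in>Basis. (h \<bullet> (m::'a::euclidean_space)) * f h) = f m"
  using sum_inner_basis1[of m f] by (simp add: mult.commute)

lemma adE_fst: "fst (adE Gam (Inl j) z) = j" "fst (adE Gam (Inr j) z) = 0"
  by simp_all

lemma adE_snd: "snd (adE Gam (Inl j) z) = (\<Sum>h\<in>Basis. aa Gam h j z *\<^sub>R h)" "snd (adE Gam (Inr j) z) = j"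
  by (simp_all add: aa_def)

lemma adC_Inr: "adC Gam (Inr h) Y = (\<lambda>y. snd (Y y) \<bullet> h - (\<Sum>j\<in>Basis. (fst (Y y) \<bullet> j) * aa Gam h j y))"
  by (rule ext) (simp add: aa_def)

context tstar begin

lemma adC_Inl_hasd:
  assumes Y: "(Y has_derivative Y') (at z)"
  shows "((adC Gam (Inl j) Y) has_derivative (\<lambda>d. fst (Y' d) \<bullet> j)) (at z)"
proof -
  have "((\<lambda>y. fst (Y y) \<bullet> j) has_derivative (\<lambda>d. fst (Y' d) \<bullet> j)) (at z)"
    by (intro hasd_inner_const has_derivative_fst Y)
  then show ?thesis by (simp add: adC.simps[abs_def])
qed

lemma adC_Inr_hasd:
  assumes Y: "(Y has_derivative Y') (at z)" and h: "h \<in> Basis" and z: "fst z \<in> U"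
  shows "((adC Gam (Inr h) Y) has_derivative (\<lambda>d. snd (Y' d) \<bullet> h -
      (\<Sum>j\<in>Basis. (fst (Y z) \<bullet> j) * daa Gam h j z d + (fst (Y' d) \<bullet> j) * aa Gam h j z))) (at z)"
  unfolding adC_Inr
  apply (rule has_derivative_diff)
   apply (rule hasd_inner_const)
   apply (rule has_derivative_snd)
   apply (rule Y)
  apply (rule has_derivative_sum)
  apply (rule has_derivative_mult)
   apply (rule hasd_inner_const)
   apply (rule has_derivative_fst)
   apply (rule Y)
  apply (rule aa_hasd[OF h _ z])
  apply simp
  done

lemma S1_eq:
  assumes Y: "(Y has_derivative Y') (at z)" and z: "fst z \<in> U"
  shows "(\<Sum>b\<in>adI. frechet_derivative (adC Gam b Y) (at z) d *\<^sub>R adE Gam b z)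
     = (fst (Y' d), snd (Y' d) - (\<Sum>h\<in>Basis. (\<Sum>j\<in>Basis. (fst (Y z) \<bullet> j) * daa Gam h j z d) *\<^sub>R h))"
proof -
  have "(\<Sum>b\<in>adI. frechet_derivative (adC Gam b Y) (at z) d *\<^sub>R adE Gam b z)
     = (\<Sum>j\<in>Basis. (fst (Y' d) \<bullet> j) *\<^sub>R adE Gam (Inl j) z)
     + (\<Sum>h\<in>Basis. (snd (Y' d) \<bullet> h - (\<Sum>j\<in>Basis. (fst (Y z) \<bullet> j) * daa Gam h j z d + (fst (Y' d) \<bullet> j) * aa Gam h j z)) *\<^sub>R adE Gam (Inr h) z)"
    unfolding sum_adI
    by (intro arg_cong2[where f="(+)"] sum.cong refl)
       (simp_all add: fd_at[OF adC_Inl_hasd[OF Y]] fd_at[OF adC_Inr_hasd[OF Y _ z]])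
  also have "\<dots> = (fst (Y' d), snd (Y' d) - (\<Sum>h\<in>Basis. (\<Sum>j\<in>Basis. (fst (Y z) \<bullet> j) * daa Gam h j z d) *\<^sub>R h))"
    (is "?L = ?R")
  proof (rule prod_eqI)
    show "fst ?L = fst ?R"
      by (simp add: fst_sum euclidean_representation)
  next
    show "snd ?L = snd ?R"
    proof (rule euclidean_eqI)
      fix m :: 'a assume m: "m \<in> Basis"
      show "snd ?L \<bullet> m = snd ?R \<bullet> m"
        using m by (simp del: adE.simps add: snd_sum adE_snd inner_sum_left inner_diff_left inner_add_left
                      sum_inner_basis1 sum_inner_basis2 sum.distrib sum_subtractf algebra_simps)
    qed
  qed
  finally show ?thesis .
qed

lemma S2_eq:
  "(\<Sum>a'\<in>adI. \<Sum>b'\<in>adI. \<Sum>d\<in>adI. (adC Gam a' X z * adC Gam b' Y z * omega Gam c a' b' d (fst z)) *\<^sub>R adE Gam d z)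
   = (GM Gam (fst z) (fst (X z)) (fst (Y z)), \<Sum>h\<in>Basis. NT0 Gam c h z (X z) (Y z) *\<^sub>R h)"
  (is "?L = ?R")
proof (rule prod_eqI)
  show "fst ?L = fst ?R"
    by (simp del: adE.simps add: sum_adI adE_fst fst_sum GM_def mult_ac)
next
  show "snd ?L = snd ?R"
  proof (rule euclidean_eqI)
    fix m :: 'a assume m: "m \<in> Basis"
    show "snd ?L \<bullet> m = snd ?R \<bullet> m"
      using m
      apply (simp only: sum_adI omega.simps adC.simps adE_snd snd_add snd_sum snd_scaleR
          inner_sum_left inner_add_left inner_diff_left inner_scaleR_left inner_minus_left
          sum_inner_basis1 aa_def[symmetric] mult_zero_left mult_zero_right scaleR_zero_left
          scaleR_zero_right sum.neutral_const add_0_left add_0_right inner_zero_left)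
      apply (simp add: inner_sum_basis NT0_def Cc_def sum.distrib sum_subtractf sum_distrib_left sum_divide_distrib sum_negf algebra_simps)
      done
  qed
qed

lemma connT_eq:
  assumes X: "sm_on (U \<times> UNIV) X" and Y: "sm_on (U \<times> UNIV) Y" and z: "z \<in> U \<times> UNIV"
  shows "connT Gam c X Y z = frechet_derivative Y (at z) (X z) + GT Gam c z (X z) (Y z)"
proof -
  have fz: "fst z \<in> U" using z by (auto simp: mem_Times_iff)
  have "connT Gam c X Y z = (fst (frechet_derivative Y (at z) (X z)),
      snd (frechet_derivative Y (at z) (X z)) - (\<Sum>h\<in>Basis. (\<Sum>j\<in>Basis. (fst (Y z) \<bullet> j) * daa Gam h j z (X z)) *\<^sub>R h))
     + (GM Gam (fst z) (fst (X z)) (fst (Y z)), \<Sum>h\<in>Basis. NT0 Gam c h z (X z) (Y z) *\<^sub>R h)"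
    unfolding connT_def S1_eq[OF sm_hasd[OF Y z] fz] S2_eq ..
  also have "\<dots> = frechet_derivative Y (at z) (X z) + GT Gam c z (X z) (Y z)"
    unfolding GT_def NT_def
    by (simp add: prod_eq_iff scaleR_diff_left sum_subtractf algebra_simps)
  finally show ?thesis .
qed

lemma sm_divc: "open V \<Longrightarrow> sm_on V f \<Longrightarrow> sm_on V (\<lambda>x. f x / (r::real))"
  using sm_linear[OF _ bounded_linear_divide] .

lemma GM_sm_gen: "sm_on U (\<lambda>x. GM Gam x a b)"
  unfolding GM_def
  by (intro sm_sum[OF U] sm_scaleR_const[OF U] sm_mult[OF U] sm_const[OF U]) (auto intro: Gsm')

lemma sG: "i \<in> Basis \<Longrightarrow> j \<in> Basis \<Longrightarrow> h \<in> Basis \<Longrightarrow> sm_on (U \<times> UNIV) (\<lambda>z. Gam i j h (fst z))"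
  using sm_fst_comp[OF U Gsm'] .

lemma sdG: "i \<in> Basis \<Longrightarrow> j \<in> Basis \<Longrightarrow> h \<in> Basis \<Longrightarrow>
    sm_on (U \<times> UNIV) (\<lambda>z. frechet_derivative (Gam i j h) (at (fst z)) v)"
  using sm_fst_comp[OF U sm_dd[OF Gsm']] .

lemma sC: "i \<in> Basis \<Longrightarrow> j \<in> Basis \<Longrightarrow> sm_on (U \<times> UNIV) (\<lambda>z. c i j (fst z))"
  using sm_fst_comp[OF U] csm by blast

lemma sdC: "i \<in> Basis \<Longrightarrow> j \<in> Basis \<Longrightarrow> sm_on (U \<times> UNIV) (\<lambda>z. frechet_derivative (c i j) (at (fst z)) v)"
  using sm_fst_comp[OF U sm_dd] csm by blast

lemma sP: "sm_on (U \<times> (UNIV::'a set)) (\<lambda>z. snd z \<bullet> k)"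
  using sm_inner_const[OF UV sm_linear_fun[OF UV bounded_linear_snd]] .

lemma NT_sm: "h \<in> Basis \<Longrightarrow> sm_on (U \<times> UNIV) (\<lambda>z. NT Gam c h z a b)"
  unfolding NT_def NT0_def aa_def daa_def Cc_def covc_def
  by (intro sm_add[OF UV] sm_diff[OF UV] sm_mult[OF UV] sm_sum[OF UV] sm_divc[OF UV] sm_const[OF UV] sG sdG sC sdC sP;
      simp)

lemma GT_sm: "sm_on (U \<times> UNIV) (\<lambda>z. GT Gam c z a b)"
  unfolding GT_def
  by (intro sm_pair[OF UV] sm_fst_comp[OF U GM_sm_gen] sm_sum[OF UV] sm_scaleR_const[OF UV] NT_sm)

lemma fdG_lin: "i \<in> Basis \<Longrightarrow> j \<in> Basis \<Longrightarrow> h \<in> Basis \<Longrightarrow> x \<in> U \<Longrightarrow> linear (frechet_derivative (Gam i j h) (at x))"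
  using linear_frechet_derivative[OF sm_D[OF Gsm']] by blast

lemma daa_add: "h \<in> Basis \<Longrightarrow> j \<in> Basis \<Longrightarrow> fst z \<in> U \<Longrightarrow> daa Gam h j z (a + b) = daa Gam h j z a + daa Gam h j z b"
  unfolding daa_def by (simp add: inner_add_left linear_add[OF fdG_lin] algebra_simps sum.distrib)

lemma daa_scale: "h \<in> Basis \<Longrightarrow> j \<in> Basis \<Longrightarrow> fst z \<in> U \<Longrightarrow> daa Gam h j z (r *\<^sub>R a) = r * daa Gam h j z a"
  unfolding daa_def by (simp add: linear_scale[OF fdG_lin] algebra_simps sum_distrib_left)

lemma NT_addL: "h \<in> Basis \<Longrightarrow> fst z \<in> U \<Longrightarrow> NT Gam c h z (a + a') b = NT Gam c h z a b + NT Gam c h z a' b"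
  unfolding NT_def NT0_def
  by (simp add: inner_add_left daa_add algebra_simps sum.distrib sum_subtractf)

lemma NT_scaleL: "h \<in> Basis \<Longrightarrow> fst z \<in> U \<Longrightarrow> NT Gam c h z (r *\<^sub>R a) b = r * NT Gam c h z a b"
  unfolding NT_def NT0_def
  by (simp add: daa_scale algebra_simps sum_distrib_left)

lemma NT_addR: "NT Gam c h z a (b + b') = NT Gam c h z a b + NT Gam c h z a b'"
  unfolding NT_def NT0_def
  by (simp add: inner_add_left algebra_simps sum.distrib sum_subtractf)

lemma NT_scaleR: "NT Gam c h z a (r *\<^sub>R b) = r * NT Gam c h z a b"
  unfolding NT_def NT0_def
  by (simp add: algebra_simps sum_distrib_left)

lemma GT_bil:
  assumes z: "fst z \<in> U"
  shows "bilinear (GT Gam c z)"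
  unfolding bilinear_def
proof (intro conjI allI)
  have bl: "bilinear (GM Gam (fst z))" by (rule GM_bil)
  fix a
  show "linear (GT Gam c z a)"
    by (rule linearI)
       (simp_all add: GT_def bilinear_radd[OF bl] bilinear_rmul[OF bl] NT_addR NT_scaleR
          scaleR_add_left sum.distrib scaleR_sum_right)
next
  have bl: "bilinear (GM Gam (fst z))" by (rule GM_bil)
  fix b
  show "linear (\<lambda>a. GT Gam c z a b)"
    by (rule linearI)
       (simp_all add: GT_def bilinear_ladd[OF bl] bilinear_lmul[OF bl] NT_addL[OF _ z] NT_scaleL[OF _ z]
          scaleR_add_left sum.distrib scaleR_sum_right)
qed

lemma T_cconn: "cconn (U \<times> UNIV) (GT Gam c) (connT Gam c)"
proof
  show "open (U \<times> (UNIV :: 'a set))" by (fact UV)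
  show "\<And>z. z \<in> U \<times> UNIV \<Longrightarrow> bilinear (GT Gam c z)" using GT_bil by (auto simp: mem_Times_iff)
  show "\<And>i j. i \<in> Basis \<Longrightarrow> j \<in> Basis \<Longrightarrow> sm_on (U \<times> UNIV) (\<lambda>z. GT Gam c z i j)" by (rule GT_sm)
  show "\<And>X Y z. sm_on (U \<times> UNIV) X \<Longrightarrow> sm_on (U \<times> UNIV) Y \<Longrightarrow> z \<in> U \<times> UNIV \<Longrightarrow>
     connT Gam c X Y z = frechet_derivative Y (at z) (X z) + GT Gam c z (X z) (Y z)"
    by (rule connT_eq)
qed

end



lemma fd_fst: "F differentiable (at z) \<Longrightarrow> fst (frechet_derivative F (at z) u) = frechet_derivative (\<lambda>y. fst (F y)) (at z) u"
  using fd_at[OF has_derivative_fst[OF iffD1[OF frechet_derivative_works]]] by metis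

lemma fd_snd_inner: "F differentiable (at z) \<Longrightarrow> snd (frechet_derivative F (at z) u) \<bullet> m = frechet_derivative (\<lambda>y. snd (F y) \<bullet> m) (at z) u"
  using fd_at[OF hasd_inner_const[OF has_derivative_snd[OF iffD1[OF frechet_derivative_works]]]] by metis

lemma fd_fstcomp:
  assumes "g differentiable (at (fst z))"
  shows "frechet_derivative (\<lambda>y. g (fst y)) (at z) u = frechet_derivative g (at (fst z)) (fst u)"
proof -
  have "((\<lambda>y. g (fst y)) has_derivative (\<lambda>d. frechet_derivative g (at (fst z)) (fst d))) (at z)"
    using has_derivative_compose[OF has_derivative_fst[OF has_derivative_ident[of "at z"]]
        iffD1[OF frechet_derivative_works assms]] by simp
  then show ?thesis by (rule fd_at)
qed

lemma fd_vert:
  assumes "(F has_derivative F') (at z)"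
  shows "frechet_derivative F (at z) (0, e) = frechet_derivative (\<lambda>q. F (fst z, q)) (at (snd z)) e"
proof -
  have i: "((\<lambda>q. (fst z, q)) has_derivative (\<lambda>h. (0, h))) (at (snd z))"
    by (auto intro!: derivative_eq_intros)
  have "((\<lambda>q. F (fst z, q)) has_derivative (\<lambda>h. F' (0, h))) (at (snd z))"
    using has_derivative_compose[OF i] assms by simp
  then show ?thesis using fd_at[OF assms] fd_at by metis
qed

context tstar begin

lemma GT_diff: "z \<in> U \<times> UNIV \<Longrightarrow> (\<lambda>y. GT Gam c y a b) differentiable (at z)"
  using sm_D[OF GT_sm] .

lemma L1:
  assumes z: "z \<in> U \<times> UNIV"
  shows "fst (Rm (GT Gam c) z u v w) = Rm (GM Gam) (fst z) (fst u) (fst v) (fst w)"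
proof -
  have fz: "fst z \<in> U" using z by (auto simp: mem_Times_iff)
  have d: "frechet_derivative (\<lambda>y. fst (GT Gam c y a b)) (at z) d = frechet_derivative (\<lambda>x. GM Gam x (fst a) (fst b)) (at (fst z)) (fst d)" for a b d
    using fd_fstcomp[OF sm_D[OF GM_sm_gen fz]] by (simp add: GT_def)
  show ?thesis
    unfolding Rm_def by (simp add: fd_fst[OF GT_diff[OF z]] d) (simp add: GT_def)
qed

lemma sum_Basis_prod_gen:
  fixes f :: "'a \<times> 'a \<Rightarrow> 'c::comm_monoid_add"
  shows "(\<Sum>b\<in>Basis. f b) = (\<Sum>i\<in>Basis. f (i, 0)) + (\<Sum>i\<in>Basis. f (0, i))"
proof -
  have "inj_on (\<lambda>u. (u::'a, 0::'a)) Basis" "inj_on (\<lambda>u. (0::'a, u::'a)) Basis"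
    by (auto intro!: inj_onI)
  thus ?thesis
    unfolding Basis_prod_def
    by (subst sum.union_disjoint) (auto simp: Basis_prod_def sum.reindex)
qed

lemma NT_vert:
  assumes y: "fst y \<in> U" and m: "m \<in> Basis"
  shows "NT Gam c m y (0, e) b = - (\<Sum>j\<in>Basis. (fst b \<bullet> j) * (\<Sum>k\<in>Basis. (e \<bullet> k) * Gam m j k (fst y)))"
  unfolding NT_def NT0_def daa_def using m y
  by (simp add: linear_0[OF fdG_lin])

lemma NT_horz0:
  assumes m: "m \<in> Basis"
  shows "NT Gam c m y a (0, n) = - (\<Sum>i\<in>Basis. \<Sum>j\<in>Basis. (fst a \<bullet> i) * (n \<bullet> j) * Gam i m j (fst y))"
  unfolding NT_def NT0_def by (simp add: sum_negf)

lemma GM_zero2: "GM Gam x a 0 = 0" "GM Gam x 0 b = 0"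
  unfolding GM_def by simp_all

lemma GT_inner_snd: "m \<in> Basis \<Longrightarrow> snd (GT Gam c y a b) \<bullet> m = NT Gam c m y a b"
  unfolding GT_def by (simp add: inner_sum_basis)

lemma GT_fst: "fst (GT Gam c y a b) = GM Gam (fst y) (fst a) (fst b)"
  unfolding GT_def by simp

lemma NT_q_hasd:
  assumes x: "x \<in> U" and m: "m \<in> Basis"
  shows "((\<lambda>q. NT Gam c m (x, q) v w) has_derivative (\<lambda>e.
      (\<Sum>i\<in>Basis. \<Sum>j\<in>Basis. (fst v \<bullet> i) * (fst w \<bullet> j) * (\<Sum>l\<in>Basis. Gam i j l x * (\<Sum>k\<in>Basis. (e \<bullet> k) * Gam m l k x)))
    + (\<Sum>i\<in>Basis. \<Sum>j\<in>Basis. (fst v \<bullet> i) * (\<Sum>k\<in>Basis. (fst w \<bullet> k) * (\<Sum>n\<in>Basis. (e \<bullet> n) * Gam j k n x)) * Gam i m j x)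
    - (\<Sum>j\<in>Basis. (fst w \<bullet> j) * (\<Sum>k\<in>Basis. (e \<bullet> k) * frechet_derivative (Gam m j k) (at x) (fst v))))) (at p)"
  unfolding NT_def NT0_def aa_def daa_def fst_conv snd_conv
  apply (rule derivative_eq_intros | simp)+
  apply (simp add: sum_negf)
  done

lemma hasd_Gfst:
  assumes "i \<in> Basis" "j \<in> Basis" "h \<in> Basis" "fst z \<in> U"
  shows "((\<lambda>y. Gam i j h (fst y)) has_derivative (\<lambda>d. frechet_derivative (Gam i j h) (at (fst z)) (fst d))) (at z)"
  using has_derivative_compose[OF has_derivative_fst[OF has_derivative_ident[of "at z"]] sm_hasd[OF Gsm'[OF assms(1-3)] assms(4)]] by simp

lemma Tb:
  assumes z: "z \<in> U \<times> UNIV" and m: "m \<in> Basis"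
  shows "frechet_derivative (\<lambda>y. NT Gam c m y (0, e) w) (at z) v
     = - (\<Sum>j\<in>Basis. (fst w \<bullet> j) * (\<Sum>k\<in>Basis. (e \<bullet> k) * frechet_derivative (Gam m j k) (at (fst z)) (fst v)))"
proof -
  have fz: "fst z \<in> U" using z by (auto simp: mem_Times_iff)
  have "frechet_derivative (\<lambda>y. NT Gam c m y (0, e) w) (at z)
      = frechet_derivative (\<lambda>y. - (\<Sum>j\<in>Basis. (fst w \<bullet> j) * (\<Sum>k\<in>Basis. (e \<bullet> k) * Gam m j k (fst y)))) (at z)"
    by (rule fd_local[OF UV z]) (auto simp: NT_vert[OF _ m] mem_Times_iff)
  moreover have "((\<lambda>y. - (\<Sum>j\<in>Basis. (fst w \<bullet> j) * (\<Sum>k\<in>Basis. (e \<bullet> k) * Gam m j k (fst y)))) has_derivative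
      (\<lambda>d. - (\<Sum>j\<in>Basis. (fst w \<bullet> j) * (\<Sum>k\<in>Basis. (e \<bullet> k) * frechet_derivative (Gam m j k) (at (fst z)) (fst d))))) (at z)"
    by (intro has_derivative_minus has_derivative_sum has_derivative_mult_right hasd_Gfst m fz)
  ultimately show ?thesis by (simp add: fd_at)
qed

lemma L3:
  assumes z: "z \<in> U \<times> UNIV"
  shows "snd (Rm (GT Gam c) z (0, e) v w) = 0"
proof (rule euclidean_eqI)
  fix m :: 'a assume m: "m \<in> Basis"
  have fz: "fst z \<in> U" using z by (auto simp: mem_Times_iff)
  define x where "x = fst z"
  have xU: "x \<in> U" using fz x_def by simp
  let ?eG = "\<lambda>h j. (\<Sum>k\<in>Basis. (e \<bullet> k) * Gam h j k x)"
  have f1: "(\<lambda>y. snd (GT Gam c y a b) \<bullet> m) = (\<lambda>y. NT Gam c m y a b)" for a b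
    by (rule ext) (rule GT_inner_snd[OF m])
  have Ta: "snd (frechet_derivative (\<lambda>y. GT Gam c y v w) (at z) (0, e)) \<bullet> m =
      (\<Sum>i\<in>Basis. \<Sum>j\<in>Basis. (fst v \<bullet> i) * (fst w \<bullet> j) * (\<Sum>l\<in>Basis. Gam i j l x * ?eG m l))
    + (\<Sum>i\<in>Basis. \<Sum>j\<in>Basis. (fst v \<bullet> i) * (\<Sum>k\<in>Basis. (fst w \<bullet> k) * ?eG j k) * Gam i m j x)
    - (\<Sum>j\<in>Basis. (fst w \<bullet> j) * (\<Sum>k\<in>Basis. (e \<bullet> k) * frechet_derivative (Gam m j k) (at x) (fst v)))"
    (is "_ = ?r")
  proof -
    have "snd (frechet_derivative (\<lambda>y. GT Gam c y v w) (at z) (0, e)) \<bullet> m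
        = frechet_derivative (\<lambda>y. NT Gam c m y v w) (at z) (0, e)"
      using fd_snd_inner[OF GT_diff[OF z]] f1 by simp
    also have "\<dots> = frechet_derivative (\<lambda>q. NT Gam c m (fst z, q) v w) (at (snd z)) e"
      by (rule fd_vert[OF sm_hasd[OF NT_sm[OF m] z]])
    also have "\<dots> = ?r"
      unfolding x_def by (rule fd_at[OF NT_q_hasd[OF fz m]])
    finally show ?thesis .
  qed
  have Tb': "snd (frechet_derivative (\<lambda>y. GT Gam c y (0, e) w) (at z) v) \<bullet> m =
      - (\<Sum>j\<in>Basis. (fst w \<bullet> j) * (\<Sum>k\<in>Basis. (e \<bullet> k) * frechet_derivative (Gam m j k) (at x) (fst v)))"
    using fd_snd_inner[OF GT_diff[OF z]] f1 Tb[OF z m] x_def by simp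
  have Tc: "snd (GT Gam c z (0, e) (GT Gam c z v w)) \<bullet> m =
      - (\<Sum>j\<in>Basis. (\<Sum>i\<in>Basis. \<Sum>l\<in>Basis. Gam i l j x * (fst v \<bullet> i) * (fst w \<bullet> l)) * ?eG m j)"
    using GT_inner_snd[OF m] NT_vert[OF fz m] x_def by (simp add: GT_fst GM_inner)
  have GT0: "GT Gam c z (0, e) w = (0, snd (GT Gam c z (0, e) w))"
    by (simp add: prod_eq_iff GT_fst GM_zero2)
  have Td: "snd (GT Gam c z v (GT Gam c z (0, e) w)) \<bullet> m =
      (\<Sum>i\<in>Basis. \<Sum>j\<in>Basis. (fst v \<bullet> i) * (\<Sum>k\<in>Basis. (fst w \<bullet> k) * ?eG j k) * Gam i m j x)"
    (is "_ = ?r")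
  proof -
    have "snd (GT Gam c z v (GT Gam c z (0, e) w)) \<bullet> m
       = - (\<Sum>i\<in>Basis. \<Sum>j\<in>Basis. (fst v \<bullet> i) * (snd (GT Gam c z (0, e) w) \<bullet> j) * Gam i m j (fst z))"
      by (subst GT0) (simp add: GT_inner_snd[OF m] NT_horz0[OF m])
    also have "\<dots> = ?r"
      using NT_vert[OF fz] x_def by (simp add: GT_inner_snd sum_negf)
    finally show ?thesis .
  qed
  have S: "(\<Sum>i\<in>Basis. \<Sum>j\<in>Basis. (fst v \<bullet> i) * (fst w \<bullet> j) * (\<Sum>l\<in>Basis. Gam i j l x * ?eG m l))
      = (\<Sum>j\<in>Basis. (\<Sum>i\<in>Basis. \<Sum>l\<in>Basis. Gam i l j x * (fst v \<bullet> i) * (fst w \<bullet> l)) * ?eG m j)"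
  proof -
    have "(\<Sum>i\<in>Basis. \<Sum>j\<in>Basis. (fst v \<bullet> i) * (fst w \<bullet> j) * (\<Sum>l\<in>Basis. Gam i j l x * ?eG m l))
        = (\<Sum>i\<in>Basis. \<Sum>j\<in>Basis. \<Sum>l\<in>Basis. Gam i j l x * (fst v \<bullet> i) * (fst w \<bullet> j) * ?eG m l)"
      by (simp add: sum_distrib_left mult_ac)
    also have "\<dots> = (\<Sum>i\<in>Basis. \<Sum>l\<in>Basis. \<Sum>j\<in>Basis. Gam i j l x * (fst v \<bullet> i) * (fst w \<bullet> j) * ?eG m l)"
      by (rule sum.cong[OF refl], rule sum.swap)
    also have "\<dots> = (\<Sum>l\<in>Basis. \<Sum>i\<in>Basis. \<Sum>j\<in>Basis. Gam i j l x * (fst v \<bullet> i) * (fst w \<bullet> j) * ?eG m l)"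
      by (rule sum.swap)
    also have "\<dots> = (\<Sum>j\<in>Basis. (\<Sum>i\<in>Basis. \<Sum>l\<in>Basis. Gam i l j x * (fst v \<bullet> i) * (fst w \<bullet> l)) * ?eG m j)"
      by (simp add: sum_distrib_right)
    finally show ?thesis .
  qed
  show "snd (Rm (GT Gam c) z (0, e) v w) \<bullet> m = 0 \<bullet> m"
    unfolding Rm_def using Ta Tb' Tc Td S by (simp add: inner_diff_left inner_add_left)
qed

lemma L2:
  assumes z: "z \<in> U \<times> UNIV"
  shows "Rc (GT Gam c) z v w = Rc (GM Gam) (fst z) (fst v) (fst w)"
proof -
  have "Rc (GT Gam c) z v w = (\<Sum>i\<in>Basis. Rm (GT Gam c) z (i, 0) v w \<bullet> (i, 0)) + (\<Sum>i\<in>Basis. Rm (GT Gam c) z (0, i) v w \<bullet> (0, i))"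
    unfolding Rc_def by (rule sum_Basis_prod_gen)
  also have "\<dots> = (\<Sum>i\<in>Basis. fst (Rm (GT Gam c) z (i, 0) v w) \<bullet> i) + (\<Sum>i\<in>Basis. snd (Rm (GT Gam c) z (0, i) v w) \<bullet> i)"
    by (simp add: inner_Pair_0)
  also have "\<dots> = Rc (GM Gam) (fst z) (fst v) (fst w)"
    unfolding Rc_def by (simp add: L1[OF z] L3[OF z])
  finally show ?thesis .
qed

lemma Alg_equiv:
  "(\<forall>z\<in>U \<times> UNIV. \<forall>u v w t. - Rc (GT Gam c) z (Rm (GT Gam c) z u v w) t - Rc (GT Gam c) z w (Rm (GT Gam c) z u v t) = 0)
   \<longleftrightarrow> (\<forall>x\<in>U. \<forall>u v w t. - Rc (GM Gam) x (Rm (GM Gam) x u v w) t - Rc (GM Gam) x w (Rm (GM Gam) x u v t) = 0)"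
proof
  assume H: "\<forall>z\<in>U \<times> UNIV. \<forall>u v w t. - Rc (GT Gam c) z (Rm (GT Gam c) z u v w) t - Rc (GT Gam c) z w (Rm (GT Gam c) z u v t) = 0"
  show "\<forall>x\<in>U. \<forall>u v w t. - Rc (GM Gam) x (Rm (GM Gam) x u v w) t - Rc (GM Gam) x w (Rm (GM Gam) x u v t) = 0"
  proof (intro ballI allI)
    fix x u v w t assume x: "x \<in> U"
    have z: "(x, 0) \<in> U \<times> (UNIV :: 'a set)" using x by simp
    have "- Rc (GT Gam c) (x, 0) (Rm (GT Gam c) (x, 0) (u, 0) (v, 0) (w, 0)) (t, 0)
          - Rc (GT Gam c) (x, 0) (w, 0) (Rm (GT Gam c) (x, 0) (u, 0) (v, 0) (t, 0)) = 0"
      using H z by blast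
    then show "- Rc (GM Gam) x (Rm (GM Gam) x u v w) t - Rc (GM Gam) x w (Rm (GM Gam) x u v t) = 0"
      by (simp add: L2[OF z] L1[OF z])
  qed
next
  assume H: "\<forall>x\<in>U. \<forall>u v w t. - Rc (GM Gam) x (Rm (GM Gam) x u v w) t - Rc (GM Gam) x w (Rm (GM Gam) x u v t) = 0"
  show "\<forall>z\<in>U \<times> UNIV. \<forall>u v w t. - Rc (GT Gam c) z (Rm (GT Gam c) z u v w) t - Rc (GT Gam c) z w (Rm (GT Gam c) z u v t) = 0"
  proof (intro ballI allI)
    fix z u v w t assume z: "z \<in> U \<times> (UNIV :: 'a set)"
    have fz: "fst z \<in> U" using z by (auto simp: mem_Times_iff)
    show "- Rc (GT Gam c) z (Rm (GT Gam c) z u v w) t - Rc (GT Gam c) z w (Rm (GT Gam c) z u v t) = 0"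
      using H fz by (simp add: L2[OF z] L1[OF z])
  qed
qed

lemma main: "ricci_semisym (U \<times> UNIV) (connT Gam c) \<longleftrightarrow> ricci_semisym U (connM Gam)"
  using cconn.semisym_iff[OF T_cconn] cconn.semisym_iff[OF M_cconn] Alg_equiv by simp

end

theorem theorem3:
  fixes U :: "'a::euclidean_space set"
    and Gam :: "'a \<Rightarrow> 'a \<Rightarrow> 'a \<Rightarrow> 'a \<Rightarrow> real"
    and c :: "'a \<Rightarrow> 'a \<Rightarrow> 'a \<Rightarrow> real"
  assumes "open U"
    and "\<forall>i\<in>Basis. \<forall>j\<in>Basis. \<forall>h\<in>Basis. sm_on U (Gam i j h)"
    and "\<forall>i\<in>Basis. \<forall>j\<in>Basis. \<forall>h\<in>Basis. \<forall>x\<in>U. Gam i j h x = Gam j i h x"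
    and "\<forall>i\<in>Basis. \<forall>j\<in>Basis. sm_on U (c i j)"
    and "\<forall>i\<in>Basis. \<forall>j\<in>Basis. \<forall>x\<in>U. c i j x = c j i x"
  shows "ricci_semisym (U \<times> UNIV) (connT Gam c) \<longleftrightarrow> ricci_semisym U (connM Gam)"
proof -
  have "tstar U Gam c" using assms by unfold_locales
  then show ?thesis by (rule tstar.main)
qed



end
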